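(* Assume $a$ is (WD) or (SD) and let $\beta,\gamma\ge0$. For $z\in H^2_{\frac1a,0}(0,1)$ define $|||z|||^2:=\int_0^1(z'')^2dx+\beta z^2(1)+\gamma(z'(1))^2$. Then $|||\cdot|||$ and $\|\cdot\|_{2,\sim}$ (where $\|z\|_{2,\sim}=\|z''\|_{L^2(0,1)}$) are equivalent norms on $H^2_{\frac1a,0}(0,1)$. Moreover, for every $\lambda,\mu\in\mathbb{R}$ the variational problem $$\int_0^1 z''\varphi''dx+\beta z(1)\varphi(1)+\gamma z'(1)\varphi'(1)=\lambda\varphi(1)+\mu\varphi'(1)\qquad\forall\varphi\in H^2_{\frac1a,0}(0,1)$$ admits a unique solution $z\in H^2_{\frac1a,0}(0,1)$, which satisfies $$\int_0^1\frac{z^2}{a}dx\le (4C_{HP}+1)(|\lambda|+|\mu|)^2,\qquad |||z|||^2\le(|\lambda|+|\mu|)^2.$$ In addition $z\in D(A)$ and $Az=0$, $\beta z(1)-z'''(1)=\lambda$, $\gamma z'(1)+z''(1)=\mu$.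
   Context: $a$ is weakly degenerate (WD) if $a\in C[0,1]\cap C^1(0,1]$, $a(0)=0$, $a>0$ on $(0,1]$ and $K:=\sup_{x\in(0,1]}\frac{x|a'(x)|}{a(x)}\in(0,1)$; $a$ is strongly degenerate (SD) if $a\in C^1[0,1]$, $a(0)=0$, $a>0$ on $(0,1]$ and $K\in[1,2)$. $L^2_{\frac1a}(0,1):=\{u\in L^2(0,1):\int_0^1 u^2/a\,dx<\infty\}$; $H^1_{\frac1a,0}(0,1):=\{u\in L^2_{\frac1a}(0,1)\cap H^1(0,1):u(0)=0\}$; $H^2_{\frac1a,0}(0,1):=\{u\in H^1_{\frac1a,0}(0,1)\cap H^2(0,1):u'(0)=0\}$. $D(A):=\{u\in H^2_{\frac1a,0}(0,1): au''''\in L^2_{\frac1a}(0,1)\}$ and $Au:=au''''$. $C_{HP}>0$ is the best constant in the inequality $\int_0^1 u^2/a\,dx\le C\int_0^1(u')^2dx$ for $u\in H^1_{\frac1a,0}(0,1)$ (finite under (WD) or (SD)). *)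

theory Defs
  imports "HOL-Analysis.Analysis"
begin

text \<open>Sobolev functions are
identified with their continuous representatives on [0,1], and weak
derivatives are carried along explicitly.\<close>

definition Ksup :: "(real \<Rightarrow> real) \<Rightarrow> (real \<Rightarrow> real) \<Rightarrow> real set" where
  "Ksup a a' = (\<lambda>x. x * \<bar>a' x\<bar> / a x) ` {0<..1}"

definition WD :: "(real \<Rightarrow> real) \<Rightarrow> bool" where
  "WD a \<longleftrightarrow> continuous_on {0..1} a \<and> a 0 = 0 \<and> (\<forall>x\<in>{0<..1}. a x > 0) \<and>
     (\<exists>a'. (\<forall>x\<in>{0<..1}. (a has_real_derivative a' x) (at x within {0..1}))
          \<and> continuous_on {0<..1} a'
          \<and> bdd_above (Ksup a a') \<and> 0 < Sup (Ksup a a') \<and> Sup (Ksup a a') < 1)"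

definition SD :: "(real \<Rightarrow> real) \<Rightarrow> bool" where
  "SD a \<longleftrightarrow> a 0 = 0 \<and> (\<forall>x\<in>{0<..1}. a x > 0) \<and>
     (\<exists>a'. (\<forall>x\<in>{0..1}. (a has_real_derivative a' x) (at x within {0..1}))
          \<and> continuous_on {0..1} a'
          \<and> bdd_above (Ksup a a') \<and> 1 \<le> Sup (Ksup a a') \<and> Sup (Ksup a a') < 2)"

definition test_fun :: "(real \<Rightarrow> real) \<Rightarrow> bool" where
  "test_fun \<phi> \<longleftrightarrow> (\<forall>n x. ((deriv ^^ n) \<phi>) differentiable (at x)) \<and>
     compact (closure {x. \<phi> x \<noteq> 0}) \<and> closure {x. \<phi> x \<noteq> 0} \<subseteq> {0<..<1}"

definition loc_int :: "(real \<Rightarrow> real) \<Rightarrow> bool" where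
  "loc_int f \<longleftrightarrow> (\<forall>K. compact K \<and> K \<subseteq> {0<..<1} \<longrightarrow> set_integrable lborel K f)"

definition weak_deriv :: "(real \<Rightarrow> real) \<Rightarrow> (real \<Rightarrow> real) \<Rightarrow> bool" where
  "weak_deriv u v \<longleftrightarrow> loc_int u \<and> loc_int v \<and>
     (\<forall>\<phi>. test_fun \<phi> \<longrightarrow>
        (LINT x:{0<..<1}|lborel. u x * deriv \<phi> x) = - (LINT x:{0<..<1}|lborel. v x * \<phi> x))"

definition L2 :: "(real \<Rightarrow> real) \<Rightarrow> bool" where
  "L2 u \<longleftrightarrow> set_borel_measurable lborel {0<..<1} u \<and>
     set_integrable lborel {0<..<1} (\<lambda>x. (u x)\<^sup>2)"

definition L2a :: "(real \<Rightarrow> real) \<Rightarrow> (real \<Rightarrow> real) \<Rightarrow> bool" where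
  "L2a a u \<longleftrightarrow> L2 u \<and> set_integrable lborel {0<..<1} (\<lambda>x. (u x)\<^sup>2 / a x)"

definition H1 :: "(real \<Rightarrow> real) \<Rightarrow> (real \<Rightarrow> real) \<Rightarrow> bool" where
  "H1 u u' \<longleftrightarrow> L2 u \<and> L2 u' \<and> weak_deriv u u' \<and> continuous_on {0..1} u"

definition H1a0 :: "(real \<Rightarrow> real) \<Rightarrow> (real \<Rightarrow> real) \<Rightarrow> (real \<Rightarrow> real) \<Rightarrow> bool" where
  "H1a0 a u u' \<longleftrightarrow> H1 u u' \<and> L2a a u \<and> u 0 = 0"

definition H2a0 :: "(real \<Rightarrow> real) \<Rightarrow> (real \<Rightarrow> real) \<Rightarrow> (real \<Rightarrow> real) \<Rightarrow> (real \<Rightarrow> real) \<Rightarrow> bool" where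
  "H2a0 a u u1 u2 \<longleftrightarrow> H1a0 a u u1 \<and> H1 u1 u2 \<and> u1 0 = 0"

text \<open>\<open>u \<in> D(A)\<close>, where \<open>w\<close> is the distributional fourth derivative of \<open>u\<close>
  (so \<open>Au = a w\<close>).\<close>
definition DA :: "(real \<Rightarrow> real) \<Rightarrow> (real \<Rightarrow> real) \<Rightarrow> (real \<Rightarrow> real) \<Rightarrow> (real \<Rightarrow> real)
    \<Rightarrow> (real \<Rightarrow> real) \<Rightarrow> bool" where
  "DA a u u1 u2 w \<longleftrightarrow> H2a0 a u u1 u2 \<and> loc_int w \<and>
     (\<forall>\<phi>. test_fun \<phi> \<longrightarrow>
        (LINT x:{0<..<1}|lborel. u x * (deriv ^^ 4) \<phi> x) = (LINT x:{0<..<1}|lborel. w x * \<phi> x))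
     \<and> L2a a (\<lambda>x. a x * w x)"

definition C_HP :: "(real \<Rightarrow> real) \<Rightarrow> real" where
  "C_HP a = Inf {C. \<forall>u u'. H1a0 a u u' \<longrightarrow>
      (LINT x:{0<..<1}|lborel. (u x)\<^sup>2 / a x) \<le> C * (LINT x:{0<..<1}|lborel. (u' x)\<^sup>2)}"

definition norm2t :: "(real \<Rightarrow> real) \<Rightarrow> real" where
  "norm2t u2 = sqrt (LINT x:{0<..<1}|lborel. (u2 x)\<^sup>2)"

definition tnorm :: "real \<Rightarrow> real \<Rightarrow> (real \<Rightarrow> real) \<Rightarrow> (real \<Rightarrow> real) \<Rightarrow> (real \<Rightarrow> real) \<Rightarrow> real" where
  "tnorm \<beta> \<gamma> u u1 u2 =
     sqrt ((LINT x:{0<..<1}|lborel. (u2 x)\<^sup>2) + \<beta> * (u 1)\<^sup>2 + \<gamma> * (u1 1)\<^sup>2)"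

definition var_sol :: "(real \<Rightarrow> real) \<Rightarrow> real \<Rightarrow> real \<Rightarrow> real \<Rightarrow> real \<Rightarrow>
    (real \<Rightarrow> real) \<Rightarrow> (real \<Rightarrow> real) \<Rightarrow> (real \<Rightarrow> real) \<Rightarrow> bool" where
  "var_sol a \<beta> \<gamma> lam mu z z1 z2 \<longleftrightarrow> H2a0 a z z1 z2 \<and>
     (\<forall>\<phi> \<phi>1 \<phi>2. H2a0 a \<phi> \<phi>1 \<phi>2 \<longrightarrow>
        (LINT x:{0<..<1}|lborel. z2 x * \<phi>2 x) + \<beta> * z 1 * \<phi> 1 + \<gamma> * z1 1 * \<phi>1 1
          = lam * \<phi> 1 + mu * \<phi>1 1)"

end

theory Submission
  imports Defs "HOL-Computational_Algebra.Polynomial"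
begin

definition hh :: "real poly \<Rightarrow> real \<Rightarrow> real" where
  "hh p x = (if x > 0 then poly p (1/x) * exp (-1/x) else 0)"

definition nxt :: "real poly \<Rightarrow> real poly" where
  "nxt p = monom 1 2 * (p - pderiv p)"

lemma poly_exp_lim: fixes p :: "real poly" shows "((\<lambda>t. poly p t / exp t) \<longlongrightarrow> 0) at_top"
proof -
  have "((\<lambda>t. \<Sum>i\<le>degree p. coeff p i * (t ^ i / exp t)) \<longlongrightarrow> (\<Sum>i\<le>degree p. coeff p i * 0)) at_top"
    using tendsto_power_div_exp_0 by (intro tendsto_sum tendsto_mult tendsto_const) auto
  then show ?thesis by (simp add: poly_altdef sum_divide_distrib)
qed

lemma hh_right: fixes p :: "real poly" shows "((\<lambda>y. poly p (1/y) * exp (-1/y) / y) \<longlongrightarrow> 0) (at_right 0)"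
proof -
  have "((\<lambda>y. (\<lambda>t. poly (monom 1 1 * p) t / exp t) (inverse y)) \<longlongrightarrow> 0) (at_right 0)"
    by (rule filterlim_compose[OF poly_exp_lim filterlim_inverse_at_top_right])
  moreover have "\<forall>\<^sub>F y in at_right 0. (\<lambda>t. poly (monom 1 1 * p) t / exp t) (inverse y) = poly p (1/y) * exp (-1/y) / y"
    by (auto simp: eventually_at_right_less poly_monom exp_minus field_simps)
  ultimately show ?thesis by (rule Lim_transform_eventually)
qed

lemma hh_deriv: "(hh p has_real_derivative hh (nxt p) x) (at x)"
proof (cases "x > 0")
  case True
  have "((\<lambda>x. poly p (1/x) * exp (-1/x)) has_real_derivative
     poly (pderiv p) (1/x) * (- 1 / x^2) * exp (-1/x) + poly p (1/x) * (exp (-1/x) * (1/x^2))) (at x)"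
    using True by (auto intro!: derivative_eq_intros DERIV_chain2[OF poly_DERIV] simp: power2_eq_square field_simps)
  then have "((\<lambda>x. poly p (1/x) * exp (-1/x)) has_real_derivative hh (nxt p) x) (at x)"
    using True by (simp add: hh_def nxt_def poly_monom field_simps power2_eq_square)
  then show ?thesis
    by (rule has_field_derivative_transform_within_open[where S="{0<..}"]) (use True in \<open>auto simp: hh_def\<close>)
next
  case False
  show ?thesis
  proof (cases "x < 0")
    case True
    have "((\<lambda>x. 0) has_real_derivative hh (nxt p) x) (at x)" using True by (simp add: hh_def)
    then show ?thesis
      by (rule has_field_derivative_transform_within_open[where S="{..<0}"]) (use True in \<open>auto simp: hh_def\<close>)
  next
    case False
    then have x0: "x = 0" using \<open>\<not> x > 0\<close> by simp
    have "((\<lambda>h. (hh p (0 + h) - hh p 0) / h) \<longlongrightarrow> 0) (at 0)"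
      unfolding filterlim_at_split
    proof
      show "((\<lambda>h. (hh p (0 + h) - hh p 0) / h) \<longlongrightarrow> 0) (at_left 0)"
        by (rule tendsto_eventually) (auto simp: eventually_at_left_field hh_def intro!: exI[of _ "-1"])
      show "((\<lambda>h. (hh p (0 + h) - hh p 0) / h) \<longlongrightarrow> 0) (at_right 0)"
        using hh_right[of p] by (rule Lim_transform_eventually) (rule eventually_mono[OF eventually_at_right_less], simp add: hh_def)
    qed
    then show ?thesis using x0 by (simp add: DERIV_def hh_def)
  qed
qed

definition smooth :: "(real \<Rightarrow> real) \<Rightarrow> bool" where
  "smooth f \<longleftrightarrow> (\<forall>n x. ((deriv ^^ n) f) differentiable (at x))"

lemma smooth_coinduct:
  assumes "P f" and step: "\<And>g. P g \<Longrightarrow> (\<forall>x. g differentiable (at x)) \<and> P (deriv g)"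
  shows "smooth f"
proof -
  have "\<forall>g. P g \<longrightarrow> P ((deriv ^^ n) g)" for n
  proof (induction n)
    case 0 then show ?case by simp
  next
    case (Suc n)
    show ?case
    proof (intro allI impI)
      fix g assume "P g"
      then have "P (deriv g)" using step by blast
      then have "P ((deriv ^^ n) (deriv g))" using Suc by blast
      then show "P ((deriv ^^ Suc n) g)" by (simp add: funpow_Suc_right del: funpow.simps)
    qed
  qed
  then show ?thesis using assms unfolding smooth_def by blast
qed

inductive sm :: "(real \<Rightarrow> real) \<Rightarrow> bool" where
  sm_hh: "sm (hh p)"
| sm_const: "sm (\<lambda>x. c)"
| sm_id: "sm (\<lambda>x. x)"
| sm_add: "sm f \<Longrightarrow> sm g \<Longrightarrow> sm (\<lambda>x. f x + g x)"
| sm_mult: "sm f \<Longrightarrow> sm g \<Longrightarrow> sm (\<lambda>x. f x * g x)"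
| sm_inv: "sm f \<Longrightarrow> (\<forall>x. f x \<noteq> 0) \<Longrightarrow> sm (\<lambda>x. inverse (f x))"
| sm_aff: "sm f \<Longrightarrow> sm (\<lambda>x. f (c * x + d))"

lemma sm_deriv: "sm f \<Longrightarrow> \<exists>f'. sm f' \<and> (\<forall>x. (f has_real_derivative f' x) (at x))"
proof (induction rule: sm.induct)
  case (sm_hh p) then show ?case using hh_deriv sm.sm_hh by blast
next
  case (sm_const c)
  have "sm (\<lambda>x. 0)" by (rule sm.sm_const)
  moreover have "((\<lambda>x. c) has_real_derivative 0) (at x)" for x by (rule DERIV_const)
  ultimately show ?case by blast
next
  case sm_id
  have "sm (\<lambda>x. 1)" by (rule sm.sm_const)
  moreover have "((\<lambda>x. x) has_real_derivative 1) (at x)" for x by (rule DERIV_ident)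
  ultimately show ?case by blast
next
  case (sm_add f g)
  then obtain f' g' where a: "sm f'" "sm g'" "\<And>x. (f has_real_derivative f' x) (at x)" "\<And>x. (g has_real_derivative g' x) (at x)" by blast
  have "sm (\<lambda>x. f' x + g' x)" by (rule sm.sm_add[OF a(1,2)])
  moreover have "((\<lambda>x. f x + g x) has_real_derivative f' x + g' x) (at x)" for x by (rule DERIV_add[OF a(3,4)])
  ultimately show ?case by blast
next
  case (sm_mult f g)
  then obtain f' g' where a: "sm f'" "sm g'" "\<And>x. (f has_real_derivative f' x) (at x)" "\<And>x. (g has_real_derivative g' x) (at x)" by blast
  have "sm (\<lambda>x. f' x * g x + g' x * f x)"
    by (rule sm.sm_add[OF sm.sm_mult[OF a(1) sm_mult.hyps(2)] sm.sm_mult[OF a(2) sm_mult.hyps(1)]])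
  moreover have "((\<lambda>x. f x * g x) has_real_derivative f' x * g x + g' x * f x) (at x)" for x by (rule DERIV_mult[OF a(3,4)])
  ultimately show ?case by blast
next
  case (sm_inv f)
  then obtain f' where f': "sm f'" "\<And>x. (f has_real_derivative f' x) (at x)" by blast
  have "sm (\<lambda>x. (-1) * (f' x * (inverse (f x) * inverse (f x))))"
    by (rule sm.sm_mult[OF sm.sm_const sm.sm_mult[OF f'(1) sm.sm_mult[OF sm.sm_inv sm.sm_inv]]]) (use sm_inv in auto)
  moreover have "((\<lambda>x. inverse (f x)) has_real_derivative (-1) * (f' x * (inverse (f x) * inverse (f x)))) (at x)" for x
    using DERIV_inverse_fun[OF f'(2)[of x]] sm_inv.hyps(2) by (simp add: power2_eq_square)
  ultimately show ?case by blast
next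
  case (sm_aff f c d)
  then obtain f' where f': "sm f'" "\<And>x. (f has_real_derivative f' x) (at x)" by blast
  have "sm (\<lambda>x. f' (c * x + d) * c)" by (rule sm.sm_mult[OF sm.sm_aff[OF f'(1)] sm.sm_const])
  moreover have "((\<lambda>x. f (c * x + d)) has_real_derivative f' (c * x + d) * c) (at x)" for x
  proof -
    have "((\<lambda>x. c * x + d) has_real_derivative c) (at x)"
      using DERIV_add[OF DERIV_cmult[OF DERIV_ident, of c] DERIV_const[of d]] by simp
    then show ?thesis by (rule DERIV_chain2[OF f'(2)])
  qed
  ultimately show ?case by blast
qed

lemma sm_smooth: "sm f \<Longrightarrow> smooth f"
proof (rule smooth_coinduct[where P=sm])
  fix g assume "sm g"
  then obtain g' where g': "sm g'" "\<And>x. (g has_real_derivative g' x) (at x)" using sm_deriv by blast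
  have "deriv g = g'" using g'(2) by (intro ext DERIV_imp_deriv)
  then show "(\<forall>x. g differentiable (at x)) \<and> sm (deriv g)"
    using g' real_differentiable_def by blast
qed

lemma smooth_DERIV: "smooth f \<Longrightarrow> (((deriv ^^ n) f) has_real_derivative (deriv ^^ Suc n) f x) (at x)"
  unfolding smooth_def using DERIV_deriv_iff_real_differentiable by simp

lemma smooth_cont: "smooth f \<Longrightarrow> continuous_on S ((deriv ^^ n) f)"
  by (meson DERIV_continuous continuous_at_imp_continuous_on smooth_DERIV)

lemma smooth_times_x: assumes "smooth f" shows "smooth (\<lambda>x. x * f x)"
proof (rule smooth_coinduct[where P="\<lambda>g. g = (\<lambda>x. x * f x) \<or>
     (\<exists>n c. g = (\<lambda>x. x * (deriv ^^ Suc n) f x + c * (deriv ^^ n) f x))"])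
  fix g
  assume "g = (\<lambda>x. x * f x) \<or> (\<exists>n c. g = (\<lambda>x. x * (deriv ^^ Suc n) f x + c * (deriv ^^ n) f x))"
  then show "(\<forall>x. g differentiable (at x)) \<and> (deriv g = (\<lambda>x. x * f x) \<or>
     (\<exists>n c. deriv g = (\<lambda>x. x * (deriv ^^ Suc n) f x + c * (deriv ^^ n) f x)))"
  proof
    assume g: "g = (\<lambda>x. x * f x)"
    have d: "(g has_real_derivative x * (deriv ^^ Suc 0) f x + 1 * (deriv ^^ 0) f x) (at x)" for x
      unfolding g by (rule DERIV_cong[OF DERIV_mult[OF DERIV_ident smooth_DERIV[OF assms, of 0, simplified]]]) simp
    then have "deriv g = (\<lambda>x. x * (deriv ^^ Suc 0) f x + 1 * (deriv ^^ 0) f x)"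
      by (intro ext DERIV_imp_deriv)
    then show ?thesis using d real_differentiable_def by blast
  next
    assume "\<exists>n c. g = (\<lambda>x. x * (deriv ^^ Suc n) f x + c * (deriv ^^ n) f x)"
    then obtain n c where g: "g = (\<lambda>x. x * (deriv ^^ Suc n) f x + c * (deriv ^^ n) f x)" by blast
    have d: "(g has_real_derivative x * (deriv ^^ Suc (Suc n)) f x + (c + 1) * (deriv ^^ Suc n) f x) (at x)" for x
      unfolding g
      by (rule DERIV_cong[OF DERIV_add[OF DERIV_mult[OF DERIV_ident smooth_DERIV[OF assms, of "Suc n"]]
            DERIV_cmult[OF smooth_DERIV[OF assms, of n]]]]) (simp add: algebra_simps)
    then have "deriv g = (\<lambda>x. x * (deriv ^^ Suc (Suc n)) f x + (c + 1) * (deriv ^^ Suc n) f x)"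
      by (intro ext DERIV_imp_deriv)
    then show ?thesis using d real_differentiable_def by blast
  qed
qed (rule disjI1, rule refl)

definition Phi :: "real \<Rightarrow> real" where
  "Phi x = hh 1 x * inverse (hh 1 x + hh 1 ((-1) * x + 1))"

lemma hh1_pos: "x > 0 \<Longrightarrow> hh 1 x > 0" and hh1_zero: "x \<le> 0 \<Longrightarrow> hh 1 x = 0"
  and hh1_nonneg: "hh 1 x \<ge> 0"
  by (auto simp: hh_def)

lemma Phi_sm: "sm Phi"
proof -
  have h1: "sm (hh 1)" by (rule sm_hh)
  have h2: "sm (\<lambda>x. hh 1 ((-1) * x + 1))" by (rule sm_aff[OF h1])
  have h3: "sm (\<lambda>x. hh 1 x + hh 1 ((-1) * x + 1))" using sm_add[OF h1 h2] by simp
  have nz: "\<forall>x. hh 1 x + hh 1 ((-1) * x + 1) \<noteq> 0"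
  proof
    fix x :: real
    show "hh 1 x + hh 1 ((-1) * x + 1) \<noteq> 0"
      using hh1_pos[of x] hh1_pos[of "(-1) * x + 1"] hh1_nonneg[of x] hh1_nonneg[of "(-1) * x + 1"]
      by (cases "x > 0") auto
  qed
  have "sm (\<lambda>x. hh 1 x * inverse (hh 1 x + hh 1 ((-1) * x + 1)))"
    using sm_mult[OF h1 sm_inv[OF h3 nz]] by simp
  then show ?thesis unfolding Phi_def[abs_def] .
qed

lemma Phi_smooth: "smooth Phi" using Phi_sm sm_smooth by blast

lemma Phi_0: "x \<le> 0 \<Longrightarrow> Phi x = 0" by (simp add: Phi_def hh1_zero)
lemma Phi_1: "x \<ge> 1 \<Longrightarrow> Phi x = 1"
  using hh1_pos[of x] by (simp add: Phi_def hh1_zero)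
lemma Phi_bounds: "0 \<le> Phi x \<and> Phi x \<le> 1"
proof -
  have a: "hh 1 x \<ge> 0" "hh 1 ((-1) * x + 1) \<ge> 0" by (rule hh1_nonneg)+
  show ?thesis
  proof (cases "hh 1 x + hh 1 ((-1) * x + 1) = 0")
    case True then show ?thesis by (simp add: Phi_def)
  next
    case False
    then have "hh 1 x + hh 1 ((-1) * x + 1) > 0" using a by linarith
    then show ?thesis using a unfolding Phi_def by (simp add: field_simps)
  qed
qed

definition dPhi :: "real \<Rightarrow> real" where "dPhi = deriv Phi"

lemma dPhi_DERIV: "(Phi has_real_derivative dPhi x) (at x)"
  using smooth_DERIV[OF Phi_smooth, of 0] by (simp add: dPhi_def)

lemma dPhi_cont: "continuous_on S dPhi"
  using smooth_cont[OF Phi_smooth, of S 1] by (simp add: dPhi_def)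

lemma dPhi_out: assumes "x < 0 \<or> x > 1" shows "dPhi x = 0"
proof -
  have "(Phi has_real_derivative 0) (at x)"
    using assms
  proof (elim disjE)
    assume "x < 0"
    show ?thesis
      by (rule has_field_derivative_transform_within_open[where f="\<lambda>x. 0" and S="{..<0}"]) (use \<open>x<0\<close> Phi_0 in auto)
  next
    assume "x > 1"
    show ?thesis
      by (rule has_field_derivative_transform_within_open[where f="\<lambda>x. 1" and S="{1<..}"]) (use \<open>x>1\<close> Phi_1 in auto)
  qed
  then show ?thesis using dPhi_DERIV DERIV_unique by blast
qed

lemma test_funI:
  assumes "smooth \<phi>" "\<And>x. \<phi> x \<noteq> 0 \<Longrightarrow> a \<le> x \<and> x \<le> b" "0 < a" "b < 1"
  shows "test_fun \<phi>"
proof -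
  have sub: "closure {x. \<phi> x \<noteq> 0} \<subseteq> {a..b}"
    using assms(2) by (intro closure_minimal) auto
  have "bounded {x. \<phi> x \<noteq> 0}"
    using assms(2) by (intro bounded_subset[OF bounded_closed_interval[of a b]]) auto
  then have "compact (closure {x. \<phi> x \<noteq> 0})" by (simp add: compact_closure)
  moreover have "closure {x. \<phi> x \<noteq> 0} \<subseteq> {0<..<1}"
    by (rule order.trans[OF sub]) (use assms in auto)
  ultimately show ?thesis using assms(1) unfolding test_fun_def smooth_def by blast
qed

lemma test_smooth: "test_fun \<phi> \<Longrightarrow> smooth \<phi>"
  unfolding test_fun_def smooth_def by blast

lemma zero_open_deriv:
  fixes g :: "real \<Rightarrow> real"
  assumes "open U" "\<And>y. y \<in> U \<Longrightarrow> g y = 0" "x \<in> U"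
  shows "deriv g x = 0"
proof -
  have "(g has_real_derivative 0) (at x)"
    by (rule has_field_derivative_transform_within_open[where f="\<lambda>x. 0" and S=U]) (use assms in auto)
  then show ?thesis by (rule DERIV_imp_deriv)
qed

lemma test_out:
  assumes "test_fun \<phi>" "x \<notin> {0<..<1}"
  shows "(deriv ^^ n) \<phi> x = 0"
proof -
  let ?U = "- closure {x. \<phi> x \<noteq> 0}"
  have U: "open ?U" by auto
  have xU: "x \<in> ?U" using assms unfolding test_fun_def by auto
  have "\<forall>y\<in>?U. (deriv ^^ n) \<phi> y = 0"
  proof (induction n)
    case 0 then show ?case using closure_subset[of "{x. \<phi> x \<noteq> 0}"] by auto
  next
    case (Suc n)
    show ?case
    proof
      fix y assume "y \<in> ?U"
      then show "(deriv ^^ Suc n) \<phi> y = 0" using zero_open_deriv[OF U, of "(deriv ^^ n) \<phi>" y] Suc by simp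
    qed
  qed
  then show ?thesis using xU by blast
qed

lemma test_times_x: assumes "test_fun \<phi>" shows "test_fun (\<lambda>x. x * \<phi> x)"
proof -
  have s: "smooth (\<lambda>x. x * \<phi> x)" using smooth_times_x test_smooth assms by blast
  have sub: "closure {x. x * \<phi> x \<noteq> 0} \<subseteq> closure {x. \<phi> x \<noteq> 0}"
    by (intro closure_mono) auto
  have "bounded (closure {x. \<phi> x \<noteq> 0})"
    using assms unfolding test_fun_def by (simp add: compact_imp_bounded)
  then have "bounded {x. x * \<phi> x \<noteq> 0}"
    by (rule bounded_subset) (use closure_subset[of "{x. \<phi> x \<noteq> 0}"] in auto)
  then have "compact (closure {x. x * \<phi> x \<noteq> 0})" by (simp add: compact_closure)
  moreover have "closure {x. x * \<phi> x \<noteq> 0} \<subseteq> {0<..<1}"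
    using sub assms unfolding test_fun_def by blast
  ultimately show ?thesis using s unfolding test_fun_def smooth_def by blast
qed

lemma test_DERIV: "test_fun \<phi> \<Longrightarrow> (((deriv ^^ n) \<phi>) has_real_derivative (deriv ^^ Suc n) \<phi> x) (at x)"
  by (rule smooth_DERIV[OF test_smooth])

lemma test_cont: "test_fun \<phi> \<Longrightarrow> continuous_on S ((deriv ^^ n) \<phi>)"
  by (rule smooth_cont[OF test_smooth])

lemma deriv_times_x: assumes "test_fun \<phi>" shows "deriv (\<lambda>x. x * \<phi> x) = (\<lambda>x. \<phi> x + x * deriv \<phi> x)"
proof (rule ext, rule DERIV_imp_deriv)
  fix x
  show "((\<lambda>x. x * \<phi> x) has_real_derivative \<phi> x + x * deriv \<phi> x) (at x)"
    by (rule DERIV_cong[OF DERIV_mult[OF DERIV_ident test_DERIV[OF assms, of 0, simplified]]]) simp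
qed

lemma LINT_cont:
  fixes f :: "real \<Rightarrow> real"
  assumes "continuous_on {0..1} f"
  shows "set_integrable lborel {0<..<1} f" "(LINT x:{0<..<1}|lborel. f x) = integral {0..1} f"
proof -
  have "set_integrable lborel {0..1} f"
    using borel_integrable_compact[OF _ assms] unfolding set_integrable_def by simp
  then show si: "set_integrable lborel {0<..<1} f"
    by (rule set_integrable_subset) auto
  show "(LINT x:{0<..<1}|lborel. f x) = integral {0..1} f"
    using set_borel_integral_eq_integral(2)[OF si] by (simp add: integral_open_interval_real)
qed

lemma LINT_henstock:
  fixes f :: "real \<Rightarrow> real"
  assumes "set_integrable lborel {0<..<1} f"
  shows "(LINT x:{0<..<1}|lborel. f x) = integral {0..1} f" "f absolutely_integrable_on {0..1}"
proof -
  show "(LINT x:{0<..<1}|lborel. f x) = integral {0..1} f"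
    using set_borel_integral_eq_integral(2)[OF assms] by (simp add: integral_open_interval_real)
  have "f integrable_on {0<..<1}" "(\<lambda>x. norm (f x)) integrable_on {0<..<1}"
    using set_borel_integral_eq_integral(1)[OF assms]
      set_borel_integral_eq_integral(1)[OF set_integrable_norm[OF assms]] by auto
  then have "f absolutely_integrable_on {0<..<1}" by (simp add: absolutely_integrable_on_def)
  then show "f absolutely_integrable_on {0..1}" using absolutely_integrable_on_Icc_iff_Ioo by blast
qed

lemma set_integrable_bounded_mult:
  fixes f g :: "real \<Rightarrow> real"
  assumes "set_integrable lborel {0<..<1} f" "continuous_on {0..1} g"
  shows "set_integrable lborel {0<..<1} (\<lambda>x. f x * g x)"
proof -
  obtain B where B0: "\<forall>y\<in>g ` {0..1}. norm y \<le> B"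
    using compact_imp_bounded[OF compact_continuous_image[OF assms(2) compact_Icc]]
    unfolding bounded_iff by blast
  then have B: "\<And>x. x \<in> {0..1} \<Longrightarrow> norm (g x) \<le> B" by auto
  have mf: "(\<lambda>x. indicator {0<..<1} x *\<^sub>R f x) \<in> borel_measurable borel"
    using assms(1) by (simp add: set_integrable_def)
  have "continuous_on {0<..<1} g" using assms(2) by (rule continuous_on_subset) auto
  then have mg: "(\<lambda>x. indicator {0<..<1} x *\<^sub>R g x) \<in> borel_measurable borel"
    by (intro borel_measurable_continuous_on_indicator) auto
  have eq: "(\<lambda>x. indicator {0<..<1} x *\<^sub>R (f x * g x)) =
     (\<lambda>x. (indicator {0<..<1} x *\<^sub>R f x) * (indicator {0<..<1} x *\<^sub>R g x))"
    by (auto simp: indicator_def)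
  have "set_integrable lborel {0<..<1} (\<lambda>x. B * f x)" using assms(1) by simp
  then show ?thesis
  proof (rule set_integrable_bound)
    show "set_borel_measurable lborel {0<..<1} (\<lambda>x. f x * g x)"
      unfolding set_borel_measurable_def eq using mf mg by simp
    have "norm (f x * g x) \<le> norm (B * f x)" if "x \<in> {0<..<1}" for x
    proof -
      have "\<bar>g x\<bar> \<le> B" using B that by auto
      then have "\<bar>f x\<bar> * \<bar>g x\<bar> \<le> \<bar>f x\<bar> * B" by (rule mult_left_mono) simp
      also have "\<dots> \<le> \<bar>f x\<bar> * \<bar>B\<bar>" by (rule mult_left_mono) auto
      finally show ?thesis by (simp add: abs_mult mult.commute)
    qed
    then show "AE x in lborel. x \<in> {0<..<1} \<longrightarrow> norm (f x * g x) \<le> norm (B * f x)" by simp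
  qed
qed

definition eta :: "real \<Rightarrow> real \<Rightarrow> real \<Rightarrow> real \<Rightarrow> real" where
  "eta s t d x = Phi ((x - s) / d) - Phi ((x - (t - d)) / d)"

lemma eta_sm: assumes "d \<noteq> 0" shows "sm (eta s t d)"
proof -
  have e1: "(1/d) * x + (- s / d) = (x - s) / d" for x using assms by (simp add: field_simps)
  have e2: "(1/d) * x + (- (t - d) / d) = (x - (t - d)) / d" for x using assms by (simp add: field_simps)
  have "sm (\<lambda>x. Phi ((1/d) * x + (- s / d)) + (-1) * Phi ((1/d) * x + (- (t - d) / d)))"
    by (rule sm_add[OF sm_aff[OF Phi_sm] sm_mult[OF sm_const sm_aff[OF Phi_sm]]])
  then have "sm (\<lambda>x. Phi ((x - s) / d) + (-1) * Phi ((x - (t - d)) / d))" unfolding e1 e2 .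
  moreover have "(\<lambda>x. Phi ((x - s) / d) + (-1) * Phi ((x - (t - d)) / d)) = eta s t d"
    by (intro ext) (simp add: eta_def)
  ultimately show ?thesis by simp
qed

lemma Phi_comp_DERIV: "d \<noteq> 0 \<Longrightarrow> ((\<lambda>x. Phi ((x - c) / d)) has_real_derivative dPhi ((x - c) / d) / d) (at x)"
  by (rule DERIV_chain2[OF dPhi_DERIV, THEN DERIV_cong]) (auto intro!: derivative_eq_intros)

lemma eta_DERIV: "d \<noteq> 0 \<Longrightarrow> (eta s t d has_real_derivative
     dPhi ((x - s) / d) / d - dPhi ((x - (t - d)) / d) / d) (at x)"
  unfolding eta_def[abs_def] by (intro DERIV_diff Phi_comp_DERIV)

lemma eta_deriv: "d \<noteq> 0 \<Longrightarrow> deriv (eta s t d) = (\<lambda>x. dPhi ((x - s) / d) / d - dPhi ((x - (t - d)) / d) / d)"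
  by (intro ext DERIV_imp_deriv eta_DERIV)

lemma eta_out: assumes "0 < d" "d \<le> t - s" "x \<le> s \<or> x \<ge> t" shows "eta s t d x = 0"
  using assms(3)
proof
  assume "x \<le> s"
  then have "(x - s) / d \<le> 0" "(x - (t - d)) / d \<le> 0" using assms by (auto simp: divide_le_0_iff)
  then show ?thesis by (simp add: eta_def Phi_0)
next
  assume "x \<ge> t"
  then have "(x - s) / d \<ge> 1" "(x - (t - d)) / d \<ge> 1" using assms by (auto simp: le_divide_eq)
  then show ?thesis by (simp add: eta_def Phi_1)
qed

lemma eta_test: assumes "0 < s" "t < 1" "0 < d" "d \<le> t - s" shows "test_fun (eta s t d)"
proof (rule test_funI)
  show "smooth (eta s t d)" using eta_sm sm_smooth assms by auto
  show "s \<le> x \<and> x \<le> t" if "eta s t d x \<noteq> 0" for x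
  proof -
    have "\<not> (x \<le> s \<or> t \<le> x)" using eta_out[OF assms(3,4), of x] that by blast
    then show ?thesis by auto
  qed
qed (use assms in auto)

lemma eta_in:
  assumes "0 < d" "2 * d \<le> t - s" "s \<le> x" "x \<le> t"
  shows "0 \<le> eta s t d x" "eta s t d x \<le> 1" "s + d < x \<Longrightarrow> x < t - d \<Longrightarrow> eta s t d x = 1"
proof -
  have P1: "0 \<le> Phi y" "Phi y \<le> 1" for y using Phi_bounds by auto
  have "0 \<le> eta s t d x \<and> eta s t d x \<le> 1"
  proof (cases "x \<le> t - d")
    case True
    then have "(x - (t - d)) / d \<le> 0" using assms by (auto simp: divide_le_0_iff)
    then show ?thesis using P1 by (simp add: eta_def Phi_0)
  next
    case False
    then have "(x - s) / d \<ge> 1" using assms by (auto simp: le_divide_eq)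
    then show ?thesis using P1[of "(x - (t - d)) / d"] by (simp add: eta_def Phi_1)
  qed
  then show "0 \<le> eta s t d x" "eta s t d x \<le> 1" by auto
  assume "s + d < x" "x < t - d"
  then have "(x - s) / d \<ge> 1" "(x - (t - d)) / d \<le> 0" using assms by (auto simp: le_divide_eq divide_le_0_iff)
  then show "eta s t d x = 1" by (simp add: eta_def Phi_0 Phi_1)
qed

lemma eta_abs: "\<bar>eta s t d x\<bar> \<le> 1"
  using Phi_bounds[of "(x - s) / d"] Phi_bounds[of "(x - (t - d)) / d"] by (auto simp: eta_def)

lemma cont_at_le:
  fixes f :: "real \<Rightarrow> real"
  assumes "continuous_on {0..1} f" "x \<in> {0..1}" "e > 0"
  shows "\<exists>d>0. \<forall>y\<in>{0..1}. \<bar>y - x\<bar> \<le> d \<longrightarrow> \<bar>f y - f x\<bar> \<le> e"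
proof -
  obtain d where d: "d > 0" "\<forall>y\<in>{0..1}. dist y x < d \<longrightarrow> dist (f y) (f x) < e"
    using assms unfolding continuous_on_iff by blast
  show ?thesis
    by (rule exI[of _ "d/2"]) (use d in \<open>auto simp: dist_real_def\<close>)
qed

lemma dPhi_bound: obtains B where "B \<ge> 0" "\<And>y. \<bar>dPhi y\<bar> \<le> B"
proof -
  obtain B where B0: "\<forall>y\<in>dPhi ` {0..1}. norm y \<le> B"
    using compact_imp_bounded[OF compact_continuous_image[OF dPhi_cont compact_Icc]]
    unfolding bounded_iff by blast
  then have B: "\<And>y. y \<in> {0..1} \<Longrightarrow> norm (dPhi y) \<le> B" by auto
  have "\<bar>dPhi y\<bar> \<le> B" for y
    using B[of y] dPhi_out[of y] B[of 0] by (cases "y < 0 \<or> y > 1") auto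
  moreover have "B \<ge> 0" using B[of 0] by auto
  ultimately show ?thesis using that by blast
qed

lemma FTC_Phi:
  assumes "d > 0" "c + d \<le> 1" "c \<ge> 0"
  shows "((\<lambda>x. dPhi ((x - c) / d) / d) has_integral 1) {0..1}"
proof -
  have "((\<lambda>x. dPhi ((x - c) / d) / d) has_integral (Phi ((1 - c) / d) - Phi ((0 - c) / d))) {0..1}"
    by (rule fundamental_theorem_of_calculus)
       (use assms in \<open>auto intro!: DERIV_subset[OF Phi_comp_DERIV] simp: has_real_derivative_iff_has_vector_derivative[symmetric]\<close>)
  moreover have "Phi ((1 - c) / d) = 1" using assms by (intro Phi_1) (auto simp: le_divide_eq)
  moreover have "Phi ((0 - c) / d) = 0" using assms by (intro Phi_0) (auto simp: divide_le_0_iff)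
  ultimately show ?thesis by simp
qed

lemma dPhi_comp_cont: "continuous_on S (\<lambda>x. dPhi ((x - c) / d) / d)"
proof -
  have "continuous_on S (\<lambda>x. dPhi ((x - c) / d))"
    by (rule continuous_on_compose2[OF dPhi_cont[of UNIV]]) (auto simp only: divide_inverse intro!: continuous_intros)
  then show ?thesis by (simp only: divide_inverse) (intro continuous_intros)
qed

lemma bump_est:
  fixes v :: "real \<Rightarrow> real"
  assumes v: "continuous_on {0..1} v" and d: "d > 0" and c: "0 \<le> c" "c + d \<le> 1"
    and B: "\<And>y. \<bar>dPhi y\<bar> \<le> B"
    and e: "\<forall>y\<in>{0..1}. \<bar>y - p\<bar> \<le> d \<longrightarrow> \<bar>v y - v p\<bar> \<le> e"
    and p: "c \<le> p" "p \<le> c + d"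
  shows "\<bar>integral {0..1} (\<lambda>x. v x * (dPhi ((x - c) / d) / d)) - v p\<bar> \<le> e * B"
proof -
  define r where "r x = dPhi ((x - c) / d) / d" for x
  have rc: "continuous_on {0..1} r" unfolding r_def by (rule dPhi_comp_cont)
  have r1: "(r has_integral 1) {0..1}" unfolding r_def by (rule FTC_Phi) (use d c in auto)
  have vr: "((\<lambda>x. v x * r x) has_integral integral {0..1} (\<lambda>x. v x * r x)) {0..1}"
    by (intro integrable_integral integrable_continuous_interval continuous_intros v rc)
  have "((\<lambda>x. v x * r x - v p * r x) has_integral (integral {0..1} (\<lambda>x. v x * r x) - v p * 1)) {0..1}"
    by (intro has_integral_diff vr has_integral_mult_right r1)
  then have eq: "integral {0..1} (\<lambda>x. (v x - v p) * r x) = integral {0..1} (\<lambda>x. v x * r x) - v p"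
    by (simp add: integral_unique algebra_simps)
  have e0: "e \<ge> 0" using e p c d by (metis abs_ge_zero atLeastAtMost_iff diff_self dual_order.trans abs_0 linorder_linear add_increasing2 less_imp_le)
  have B0: "B \<ge> 0" using B[of 0] by linarith
  define g where "g x = (if x \<in> {c..c+d} then e * B / d else 0)" for x
  have gi: "g integrable_on {0..1}"
    unfolding g_def by (subst integrable_restrict_Int) auto
  have gint: "integral {0..1} g = e * B"
  proof -
    have "integral {0..1} g = integral ({c..c+d} \<inter> {0..1}) (\<lambda>x. e * B / d)"
      unfolding g_def by (rule integral_restrict_Int)
    also have "{c..c+d} \<inter> {0..1} = {c..c+d}" using c d by auto
    finally show ?thesis using d by simp
  qed
  have bound: "norm ((v x - v p) * r x) \<le> g x" if x: "x \<in> {0..1}" for x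
  proof (cases "x \<in> {c..c+d}")
    case True
    then have "\<bar>x - p\<bar> \<le> d" using p by auto
    then have "\<bar>v x - v p\<bar> \<le> e" using e x by blast
    moreover have "\<bar>r x\<bar> \<le> B / d" unfolding r_def using B d by (simp add: divide_right_mono)
    ultimately have "\<bar>v x - v p\<bar> * \<bar>r x\<bar> \<le> e * (B / d)"
      by (intro mult_mono) auto
    then show ?thesis using True by (simp add: g_def abs_mult)
  next
    case False
    then have "(x - c) / d < 0 \<or> (x - c) / d > 1" using d by (auto simp: divide_less_0_iff less_divide_eq)
    then have "r x = 0" unfolding r_def using dPhi_out by simp
    then show ?thesis using False by (auto simp: g_def)
  qed
  have "norm (integral {0..1} (\<lambda>x. (v x - v p) * r x)) \<le> integral {0..1} g"
    by (rule integral_norm_bound_integral[OF _ gi bound])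
       (intro integrable_continuous_interval continuous_intros v rc)
  then have "\<bar>integral {0..1} (\<lambda>x. v x * r x) - v p\<bar> \<le> e * B" using eq gint by (metis real_norm_def)
  then show ?thesis unfolding r_def .
qed

lemma w_est:
  fixes w :: "real \<Rightarrow> real"
  assumes w: "w absolutely_integrable_on {0..1}" and st: "0 < s" "t < 1" and d: "0 < d" "2 * d \<le> t - s"
  shows "\<bar>integral {0..1} (\<lambda>x. w x * eta s t d x) - integral {s..t} w\<bar>
           \<le> integral {s..s+d} (\<lambda>x. \<bar>w x\<bar>) + integral {t-d..t} (\<lambda>x. \<bar>w x\<bar>)"
proof -
  have wi: "w integrable_on {0..1}" and awi: "(\<lambda>x. \<bar>w x\<bar>) integrable_on {0..1}"
    using w unfolding absolutely_integrable_on_def by auto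
  have dts: "d \<le> t - s" using d by linarith
  have test: "test_fun (eta s t d)" by (rule eta_test) (use st d in auto)
  have ec: "continuous_on {0..1} (eta s t d)" using test_cont[OF test, of _ 0] by simp
  have "(\<lambda>x. eta s t d x * w x) absolutely_integrable_on {0..1}"
    by (rule absolutely_integrable_bounded_measurable_product_real[OF continuous_imp_measurable_on_sets_lebesgue[OF ec] _ _ w])
       (auto simp: bounded_iff intro!: exI[of _ 1] eta_abs)
  then have we: "(\<lambda>x. w x * eta s t d x) integrable_on {0..1}"
    by (simp add: absolutely_integrable_on_def mult.commute)
  have sti: "{s..t} \<inter> {0..1} = {s..t}" using st d by auto
  have i1: "{s..s+d} \<inter> {0..1} = {s..s+d}" using st d by auto
  have i2: "{t-d..t} \<inter> {0..1} = {t-d..t}" using st d by auto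
  have ws: "(\<lambda>x. if x \<in> {s..t} then w x else 0) integrable_on {0..1}"
    unfolding integrable_restrict_Int sti by (rule integrable_subinterval_real[OF wi]) (use st in auto)
  have wsint: "integral {0..1} (\<lambda>x. if x \<in> {s..t} then w x else 0) = integral {s..t} w"
    unfolding integral_restrict_Int sti ..
  have g1i: "(\<lambda>x. if x \<in> {s..s+d} then \<bar>w x\<bar> else 0) integrable_on {0..1}"
    unfolding integrable_restrict_Int i1 by (rule integrable_subinterval_real[OF awi]) (use st d in auto)
  have g2i: "(\<lambda>x. if x \<in> {t-d..t} then \<bar>w x\<bar> else 0) integrable_on {0..1}"
    unfolding integrable_restrict_Int i2 by (rule integrable_subinterval_real[OF awi]) (use st d in auto)
  define g where "g x = (if x \<in> {s..s+d} then \<bar>w x\<bar> else 0) + (if x \<in> {t-d..t} then \<bar>w x\<bar> else 0)" for x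
  have gi: "g integrable_on {0..1}" unfolding g_def by (rule integrable_add[OF g1i g2i])
  have gint: "integral {0..1} g = integral {s..s+d} (\<lambda>x. \<bar>w x\<bar>) + integral {t-d..t} (\<lambda>x. \<bar>w x\<bar>)"
    unfolding g_def integral_add[OF g1i g2i] integral_restrict_Int i1 i2 ..
  have bound: "norm (w x * eta s t d x - (if x \<in> {s..t} then w x else 0)) \<le> g x" if x: "x \<in> {0..1}" for x
  proof -
    have g0: "0 \<le> (if x \<in> {s..s+d} then \<bar>w x\<bar> else 0)" "0 \<le> (if x \<in> {t-d..t} then \<bar>w x\<bar> else 0)"
      by auto
    show ?thesis
    proof (cases "s \<le> x \<and> x \<le> t")
      case False
      then have "eta s t d x = 0" using eta_out[OF d(1) dts, of x] by auto
      then show ?thesis using False g0 by (simp add: g_def)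
    next
      case True
      then have e01: "0 \<le> eta s t d x" "eta s t d x \<le> 1" using eta_in[OF d] by auto
      have lhs: "norm (w x * eta s t d x - (if x \<in> {s..t} then w x else 0)) = \<bar>w x\<bar> * \<bar>eta s t d x - 1\<bar>"
        using True by (simp add: abs_mult[symmetric] algebra_simps)
      show ?thesis
      proof (cases "s + d < x \<and> x < t - d")
        case True2: True
        then have "eta s t d x = 1" using eta_in[OF d] True by auto
        then show ?thesis using lhs g0 by (simp add: g_def)
      next
        case False2: False
        then have "x \<in> {s..s+d} \<or> x \<in> {t-d..t}" using True by auto
        moreover have "\<bar>w x\<bar> * \<bar>eta s t d x - 1\<bar> \<le> \<bar>w x\<bar>"
          using e01 by (intro mult_left_le) auto
        ultimately show ?thesis using lhs g0 unfolding g_def by auto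
      qed
    qed
  qed
  have "norm (integral {0..1} (\<lambda>x. w x * eta s t d x - (if x \<in> {s..t} then w x else 0))) \<le> integral {0..1} g"
    by (rule integral_norm_bound_integral[OF integrable_diff[OF we ws] gi bound])
  then show ?thesis using integral_diff[OF we ws] wsint gint by simp
qed

lemma core_interior:
  fixes v w :: "real \<Rightarrow> real"
  assumes v: "continuous_on {0..1} v" and w: "w absolutely_integrable_on {0..1}"
    and wd: "\<And>\<phi>. test_fun \<phi> \<Longrightarrow> integral {0..1} (\<lambda>x. v x * deriv \<phi> x) = - integral {0..1} (\<lambda>x. w x * \<phi> x)"
    and st: "0 < s" "s < t" "t < 1"
  shows "v t - v s = integral {s..t} w"
proof -
  have awi: "(\<lambda>x. \<bar>w x\<bar>) integrable_on {0..1}"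
    using w unfolding absolutely_integrable_on_def by auto
  define I where "I x = integral {0..x} (\<lambda>y. \<bar>w y\<bar>)" for x
  have Ic: "continuous_on {0..1} I" unfolding I_def by (rule indefinite_integral_continuous_1[OF awi])
  obtain B where B0: "B \<ge> 0" and B: "\<And>y. \<bar>dPhi y\<bar> \<le> B" using dPhi_bound by blast
  have Iint: "integral {a..b} (\<lambda>y. \<bar>w y\<bar>) = I b - I a" if "0 \<le> a" "a \<le> b" "b \<le> 1" for a b
    using Henstock_Kurzweil_Integration.integral_combine[where a=0 and c=a and b=b and f="\<lambda>y. \<bar>w y\<bar>"] integrable_subinterval_real[OF awi, of 0 b] that
    unfolding I_def by auto
  have key: "\<bar>v t - v s - integral {s..t} w\<bar> \<le> (2 * B + 2) * e" if e: "e > 0" for e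
  proof -
    have sI: "s \<in> {0..1}" "t \<in> {0..1}" using st by auto
    obtain d1 where d1: "d1 > 0" "\<forall>y\<in>{0..1}. \<bar>y - s\<bar> \<le> d1 \<longrightarrow> \<bar>v y - v s\<bar> \<le> e"
      using cont_at_le[OF v sI(1) e] by blast
    obtain d2 where d2: "d2 > 0" "\<forall>y\<in>{0..1}. \<bar>y - t\<bar> \<le> d2 \<longrightarrow> \<bar>v y - v t\<bar> \<le> e"
      using cont_at_le[OF v sI(2) e] by blast
    obtain d3 where d3: "d3 > 0" "\<forall>y\<in>{0..1}. \<bar>y - s\<bar> \<le> d3 \<longrightarrow> \<bar>I y - I s\<bar> \<le> e"
      using cont_at_le[OF Ic sI(1) e] by blast
    obtain d4 where d4: "d4 > 0" "\<forall>y\<in>{0..1}. \<bar>y - t\<bar> \<le> d4 \<longrightarrow> \<bar>I y - I t\<bar> \<le> e"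
      using cont_at_le[OF Ic sI(2) e] by blast
    define d where "d = min (min d1 d2) (min (min d3 d4) ((t - s) / 2))"
    have d: "d > 0" "d \<le> d1" "d \<le> d2" "d \<le> d3" "d \<le> d4" "2 * d \<le> t - s"
      using d1(1) d2(1) d3(1) d4(1) st unfolding d_def by (auto simp: min_def)
    have dne: "d \<noteq> 0" using d by simp
    have test: "test_fun (eta s t d)" by (rule eta_test) (use st d in auto)
    have weq: "integral {0..1} (\<lambda>x. v x * deriv (eta s t d) x) = - integral {0..1} (\<lambda>x. w x * eta s t d x)"
      by (rule wd[OF test])
    define r1 where "r1 x = dPhi ((x - s) / d) / d" for x
    define r2 where "r2 x = dPhi ((x - (t - d)) / d) / d" for x
    have deq: "(\<lambda>x. v x * deriv (eta s t d) x) = (\<lambda>x. v x * r1 x - v x * r2 x)"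
      unfolding eta_deriv[OF dne] r1_def r2_def by (simp add: algebra_simps)
    have i1: "(\<lambda>x. v x * r1 x) integrable_on {0..1}" unfolding r1_def
      by (intro integrable_continuous_interval continuous_intros v dPhi_comp_cont)
    have i2: "(\<lambda>x. v x * r2 x) integrable_on {0..1}" unfolding r2_def
      by (intro integrable_continuous_interval continuous_intros v dPhi_comp_cont)
    have E1: "\<bar>integral {0..1} (\<lambda>x. v x * r1 x) - v s\<bar> \<le> e * B"
      unfolding r1_def by (rule bump_est[OF v d(1) _ _ B]) (use st d d1 in auto)
    have E2: "\<bar>integral {0..1} (\<lambda>x. v x * r2 x) - v t\<bar> \<le> e * B"
      unfolding r2_def by (rule bump_est[OF v d(1) _ _ B]) (use st d d2 in auto)
    have E3: "\<bar>integral {0..1} (\<lambda>x. w x * eta s t d x) - integral {s..t} w\<bar>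
           \<le> integral {s..s+d} (\<lambda>x. \<bar>w x\<bar>) + integral {t-d..t} (\<lambda>x. \<bar>w x\<bar>)"
      by (rule w_est[OF w]) (use st d in auto)
    have "integral {s..s+d} (\<lambda>x. \<bar>w x\<bar>) = I (s + d) - I s" by (rule Iint) (use st d in auto)
    moreover have "\<bar>I (s + d) - I s\<bar> \<le> e" using d3 d st by auto
    moreover have "integral {t-d..t} (\<lambda>x. \<bar>w x\<bar>) = I t - I (t - d)" by (rule Iint) (use st d in auto)
    moreover have "\<bar>I (t - d) - I t\<bar> \<le> e" using d4 d st by auto
    ultimately have E3': "\<bar>integral {0..1} (\<lambda>x. w x * eta s t d x) - integral {s..t} w\<bar> \<le> 2 * e"
      using E3 by (simp add: abs_le_iff)
    have "integral {0..1} (\<lambda>x. v x * r1 x) - integral {0..1} (\<lambda>x. v x * r2 x)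
        = - integral {0..1} (\<lambda>x. w x * eta s t d x)"
      using weq unfolding deq integral_diff[OF i1 i2] .
    then show ?thesis using E1 E2 E3' by (simp add: abs_le_iff algebra_simps)
  qed
  show ?thesis
  proof (rule ccontr)
    assume ne: "v t - v s \<noteq> integral {s..t} w"
    define D where "D = \<bar>v t - v s - integral {s..t} w\<bar>"
    have D: "D > 0" using ne unfolding D_def by auto
    have "D \<le> (2 * B + 2) * (D / (2 * (2 * B + 2)))" unfolding D_def
      by (rule key) (use D B0 in \<open>auto simp: D_def\<close>)
    also have "\<dots> = D / 2" using B0 by (simp add: field_simps)
    finally show False using D by simp
  qed
qed

lemma core_H:
  fixes v w :: "real \<Rightarrow> real"
  assumes v: "continuous_on {0..1} v" and w: "w absolutely_integrable_on {0..1}"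
    and wd: "\<And>\<phi>. test_fun \<phi> \<Longrightarrow> integral {0..1} (\<lambda>x. v x * deriv \<phi> x) = - integral {0..1} (\<lambda>x. w x * \<phi> x)"
    and x: "x \<in> {0..1}"
  shows "v x = v 0 + integral {0..x} w"
proof -
  have wi: "w integrable_on {0..1}" using w unfolding absolutely_integrable_on_def by auto
  define G where "G y = v y - integral {0..y} w" for y
  have Gc: "continuous_on {0..1} G" unfolding G_def
    by (rule continuous_on_diff[OF v indefinite_integral_continuous_1[OF wi]])
  have Gst: "G t = G s" if "0 < s" "s < t" "t < 1" for s t
  proof -
    have wt: "w integrable_on {0..t}" by (rule integrable_subinterval_real[OF wi]) (use that in auto)
    have "integral {0..s} w + integral {s..t} w = integral {0..t} w"
      by (rule Henstock_Kurzweil_Integration.integral_combine[OF _ _ wt]) (use that in auto)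
    then show ?thesis using core_interior[OF v w wd that] unfolding G_def by linarith
  qed
  have Gconst: "G y = G (1/2)" if "y \<in> {0<..<1}" for y
  proof -
    define m where "m = min y (1/2) / 2"
    have m: "0 < m" "m < y" "m < 1/2" using that unfolding m_def by auto
    have "G y = G m" by (rule Gst) (use m that in auto)
    moreover have "G (1/2) = G m" by (rule Gst) (use m in auto)
    ultimately show ?thesis by simp
  qed
  have cl: "closure {0<..<1::real} = {0..1}" by (rule closure_greaterThanLessThan) simp
  have Gc': "continuous_on (closure {0<..<1::real}) G" unfolding cl by (rule Gc)
  have x': "x \<in> closure {0<..<1::real}" "0 \<in> closure {0<..<1::real}" unfolding cl using x by auto
  have "G x = G (1/2)" by (rule continuous_constant_on_closure[OF Gc' Gconst x'(1)])
  moreover have "G 0 = G (1/2)" by (rule continuous_constant_on_closure[OF Gc' Gconst x'(2)])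
  ultimately have "G x = G 0" by simp
  moreover have "integral {0..0} w = 0" by simp
  ultimately show ?thesis unfolding G_def by linarith
qed

lemma weak_H:
  fixes v w :: "real \<Rightarrow> real"
  assumes v: "continuous_on {0..1} v" and w: "set_integrable lborel {0<..<1} w"
    and wd: "\<And>\<phi>. test_fun \<phi> \<Longrightarrow> (LINT x:{0<..<1}|lborel. v x * deriv \<phi> x) = - (LINT x:{0<..<1}|lborel. w x * \<phi> x)"
    and \<phi>: "test_fun \<phi>"
  shows "integral {0..1} (\<lambda>x. v x * deriv \<phi> x) = - integral {0..1} (\<lambda>x. w x * \<phi> x)"
proof -
  have c0: "continuous_on {0..1} \<phi>" using test_cont[OF \<phi>, of _ 0] by simp
  have c1: "continuous_on {0..1} (deriv \<phi>)" using test_cont[OF \<phi>, of _ 1] by simp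
  have "(LINT x:{0<..<1}|lborel. v x * deriv \<phi> x) = integral {0..1} (\<lambda>x. v x * deriv \<phi> x)"
    by (rule LINT_cont(2)) (intro continuous_intros v c1)
  moreover have "(LINT x:{0<..<1}|lborel. w x * \<phi> x) = integral {0..1} (\<lambda>x. w x * \<phi> x)"
    by (rule LINT_henstock(1)[OF set_integrable_bounded_mult[OF w c0]])
  ultimately show ?thesis using wd[OF \<phi>] by simp
qed

lemma abs_le_1_sq: "\<bar>y::real\<bar> \<le> 1 + y\<^sup>2"
proof -
  have "0 \<le> (\<bar>y\<bar> - 1)\<^sup>2" by simp
  then have "2 * \<bar>y\<bar> \<le> \<bar>y\<bar>\<^sup>2 + 1" by (simp add: power2_diff)
  then show ?thesis by simp
qed

lemma L2_L1: assumes "L2 u" shows "set_integrable lborel {0<..<1} u"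
proof -
  have c: "set_integrable lborel {0<..<1::real} (\<lambda>x. 1::real)"
    unfolding set_integrable_def by (rule integrable_indicator) (simp_all add: greaterThanLessThan_borel)
  have "set_integrable lborel {0<..<1} (\<lambda>x. 1 + (u x)\<^sup>2)"
    using assms c unfolding L2_def by (intro set_integral_add(1)) auto
  then show ?thesis
  proof (rule set_integrable_bound)
    show "set_borel_measurable lborel {0<..<1} u" using assms unfolding L2_def by auto
    show "AE x in lborel. x \<in> {0<..<1} \<longrightarrow> norm (u x) \<le> norm (1 + (u x)\<^sup>2)"
      using abs_le_1_sq by auto
  qed
qed

lemma H1_FTC:
  assumes "H1 u u'" "x \<in> {0..1}"
  shows "u x = u 0 + integral {0..x} u'"
proof -
  have v: "continuous_on {0..1} u" and w: "set_integrable lborel {0<..<1} u'"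
    using assms L2_L1 unfolding H1_def by auto
  show ?thesis
  proof (rule core_H[OF v LINT_henstock(2)[OF w] _ assms(2)])
    fix \<phi> assume "test_fun \<phi>"
    then show "integral {0..1} (\<lambda>x. u x * deriv \<phi> x) = - integral {0..1} (\<lambda>x. u' x * \<phi> x)"
      using assms(1) unfolding H1_def weak_deriv_def by (intro weak_H[OF v w]) auto
  qed
qed

lemma H1_IBP:
  assumes H: "H1 u u'"
  shows "integral {0..1} (\<lambda>x. x * u' x) = u 1 - integral {0..1} u"
proof -
  have v: "continuous_on {0..1} u" and w: "set_integrable lborel {0<..<1} u'"
    using assms L2_L1 unfolding H1_def by auto
  have wa: "u' absolutely_integrable_on {0..1}" by (rule LINT_henstock(2)[OF w])
  have wdH: "integral {0..1} (\<lambda>x. u x * deriv \<phi> x) = - integral {0..1} (\<lambda>x. u' x * \<phi> x)"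
    if "test_fun \<phi>" for \<phi>
    using H that unfolding H1_def weak_deriv_def by (intro weak_H[OF v w]) auto
  have xw: "(\<lambda>x. x * u' x) absolutely_integrable_on {0..1}"
    by (rule absolutely_integrable_bounded_measurable_product_real[OF continuous_imp_measurable_on_sets_lebesgue _ _ wa])
       (auto intro!: continuous_intros simp: bounded_iff intro!: exI[of _ 1])
  have w2: "(\<lambda>x. u x + x * u' x) absolutely_integrable_on {0..1}"
    by (rule set_integral_add(1)[OF absolutely_integrable_continuous_real[OF v] xw])
  have main: "integral {0..1} (\<lambda>x. x * u x * deriv \<phi> x) = - integral {0..1} (\<lambda>x. (u x + x * u' x) * \<phi> x)"
    if \<phi>: "test_fun \<phi>" for \<phi>
  proof -
    have c0: "continuous_on {0..1} \<phi>" using test_cont[OF \<phi>, of _ 0] by simp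
    have c1: "continuous_on {0..1} (deriv \<phi>)" using test_cont[OF \<phi>, of _ 1] by simp
    have \<psi>: "test_fun (\<lambda>x. x * \<phi> x)" by (rule test_times_x[OF \<phi>])
    have i1: "(\<lambda>x. u x * \<phi> x) integrable_on {0..1}" by (intro integrable_continuous_interval continuous_intros v c0)
    have i2: "(\<lambda>x. x * u x * deriv \<phi> x) integrable_on {0..1}" by (intro integrable_continuous_interval continuous_intros v c1)
    have "(\<lambda>x. (x * \<phi> x) * u' x) absolutely_integrable_on {0..1}"
      by (rule absolutely_integrable_bounded_measurable_product_real[OF continuous_imp_measurable_on_sets_lebesgue _ _ wa])
         (auto intro!: continuous_intros c0 compact_imp_bounded compact_continuous_image)
    then have i3: "(\<lambda>x. u' x * (x * \<phi> x)) integrable_on {0..1}"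
      unfolding absolutely_integrable_on_def by (simp add: mult.commute)
    have "integral {0..1} (\<lambda>x. u x * deriv (\<lambda>x. x * \<phi> x) x) = integral {0..1} (\<lambda>x. u x * \<phi> x + x * u x * deriv \<phi> x)"
      unfolding deriv_times_x[OF \<phi>] by (simp add: algebra_simps)
    also have "\<dots> = integral {0..1} (\<lambda>x. u x * \<phi> x) + integral {0..1} (\<lambda>x. x * u x * deriv \<phi> x)"
      by (rule integral_add[OF i1 i2])
    finally have A: "integral {0..1} (\<lambda>x. u x * \<phi> x) + integral {0..1} (\<lambda>x. x * u x * deriv \<phi> x)
       = - integral {0..1} (\<lambda>x. u' x * (x * \<phi> x))" using wdH[OF \<psi>] by simp
    have "integral {0..1} (\<lambda>x. (u x + x * u' x) * \<phi> x) = integral {0..1} (\<lambda>x. u x * \<phi> x + u' x * (x * \<phi> x))"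
      by (simp add: algebra_simps)
    also have "\<dots> = integral {0..1} (\<lambda>x. u x * \<phi> x) + integral {0..1} (\<lambda>x. u' x * (x * \<phi> x))"
      by (rule integral_add[OF i1 i3])
    finally show ?thesis using A by simp
  qed
  have "(\<lambda>x. x * u x) 1 = (\<lambda>x. x * u x) 0 + integral {0..1} (\<lambda>x. u x + x * u' x)"
    by (rule core_H[OF _ w2]) (auto intro!: continuous_intros v main)
  moreover have "integral {0..1} (\<lambda>x. u x + x * u' x) = integral {0..1} u + integral {0..1} (\<lambda>x. x * u' x)"
    by (rule integral_add) (use integrable_continuous_interval[OF v] xw absolutely_integrable_on_def in auto)
  ultimately show ?thesis by simp
qed

lemma CS_int:
  fixes f :: "real \<Rightarrow> real"
  assumes f: "f integrable_on {0..x}" and f2: "(\<lambda>y. (f y)\<^sup>2) integrable_on {0..x}" and x: "0 \<le> x"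
  shows "(integral {0..x} f)\<^sup>2 \<le> x * integral {0..x} (\<lambda>y. (f y)\<^sup>2)"
proof (cases "x = 0")
  case True then show ?thesis by simp
next
  case False
  then have xp: "x > 0" using x by simp
  define F1 where "F1 = integral {0..x} f"
  define F2 where "F2 = integral {0..x} (\<lambda>y. (f y)\<^sup>2)"
  define m where "m = F1 / x"
  have "((\<lambda>y. (f y)\<^sup>2 - 2 * m * f y + m\<^sup>2) has_integral (F2 - 2 * m * F1 + m\<^sup>2 * x)) {0..x}"
  proof (intro has_integral_add has_integral_diff)
    show "((\<lambda>y. (f y)\<^sup>2) has_integral F2) {0..x}" unfolding F2_def using f2 by (rule integrable_integral)
    show "((\<lambda>y. 2 * m * f y) has_integral 2 * m * F1) {0..x}"
      unfolding F1_def by (rule has_integral_mult_right[OF integrable_integral[OF f]])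
    show "((\<lambda>y. m\<^sup>2) has_integral m\<^sup>2 * x) {0..x}"
      using has_integral_const_real[of "m\<^sup>2" 0 x] x by (simp add: mult.commute)
  qed
  then have "0 \<le> F2 - 2 * m * F1 + m\<^sup>2 * x"
  proof (rule has_integral_nonneg)
    fix y
    have h: "(f y - m)\<^sup>2 = (f y)\<^sup>2 - 2 * m * f y + m\<^sup>2" by (simp add: power2_diff algebra_simps)
    show "0 \<le> (f y)\<^sup>2 - 2 * m * f y + m\<^sup>2" using h zero_le_power2[of "f y - m"] by linarith
  qed
  also have "F2 - 2 * m * F1 + m\<^sup>2 * x = F2 - F1\<^sup>2 / x"
    unfolding m_def using xp by (simp add: field_simps power2_eq_square)
  finally have "F1\<^sup>2 / x \<le> F2" by simp
  then show ?thesis using xp unfolding F1_def[symmetric] F2_def[symmetric] by (simp add: divide_le_eq mult.commute)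
qed

lemma L2_henstock:
  assumes "L2 u"
  shows "u absolutely_integrable_on {0..1}" "(\<lambda>x. (u x)\<^sup>2) integrable_on {0..1}"
    "(LINT x:{0<..<1}|lborel. (u x)\<^sup>2) = integral {0..1} (\<lambda>x. (u x)\<^sup>2)"
proof -
  show "u absolutely_integrable_on {0..1}" by (rule LINT_henstock(2)[OF L2_L1[OF assms]])
  have s: "set_integrable lborel {0<..<1} (\<lambda>x. (u x)\<^sup>2)" using assms unfolding L2_def by auto
  show "(\<lambda>x. (u x)\<^sup>2) integrable_on {0..1}"
    using LINT_henstock(2)[OF s] unfolding absolutely_integrable_on_def by auto
  show "(LINT x:{0<..<1}|lborel. (u x)\<^sup>2) = integral {0..1} (\<lambda>x. (u x)\<^sup>2)"
    by (rule LINT_henstock(1)[OF s])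
qed

lemma H1_sq_bound:
  assumes H: "H1 u u'" and u0: "u 0 = 0" and x: "x \<in> {0..1}"
  shows "(u x)\<^sup>2 \<le> x * integral {0..1} (\<lambda>y. (u' y)\<^sup>2)"
proof -
  have L: "L2 u'" using H unfolding H1_def by auto
  have i1: "u' integrable_on {0..1}" using L2_henstock(1)[OF L] unfolding absolutely_integrable_on_def by auto
  have i2: "(\<lambda>y. (u' y)\<^sup>2) integrable_on {0..1}" by (rule L2_henstock(2)[OF L])
  have sub: "{0..x} \<subseteq> {0..1}" using x by auto
  have "u x = integral {0..x} u'" using H1_FTC[OF H x] u0 by simp
  then have "(u x)\<^sup>2 \<le> x * integral {0..x} (\<lambda>y. (u' y)\<^sup>2)"
    using CS_int[OF integrable_on_subinterval[OF i1 sub] integrable_on_subinterval[OF i2 sub]] x by simp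
  also have "\<dots> \<le> x * integral {0..1} (\<lambda>y. (u' y)\<^sup>2)"
    using x by (intro mult_left_mono integral_subset_le[OF sub integrable_on_subinterval[OF i2 sub] i2]) auto
  finally show ?thesis .
qed

lemma C1_weak_deriv:
  fixes u u' :: "real \<Rightarrow> real"
  assumes d: "\<And>x. (u has_real_derivative u' x) (at x)" and c: "continuous_on UNIV u'"
  shows "weak_deriv u u'"
proof -
  have uc: "continuous_on S u" for S
    by (rule continuous_at_imp_continuous_on) (use d DERIV_isCont in blast)
  have uc': "continuous_on S u'" for S using c by (rule continuous_on_subset) auto
  have li: "loc_int f" if "\<And>S. continuous_on S f" for f :: "real \<Rightarrow> real"
    unfolding loc_int_def set_integrable_def
  proof (intro allI impI)
    fix K :: "real set" assume "compact K \<and> K \<subseteq> {0<..<1}"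
    then show "integrable lborel (\<lambda>x. indicator K x *\<^sub>R f x)"
      by (intro borel_integrable_compact that) auto
  qed
  have eq: "(LINT x:{0<..<1}|lborel. u x * deriv \<phi> x) = - (LINT x:{0<..<1}|lborel. u' x * \<phi> x)"
    if \<phi>: "test_fun \<phi>" for \<phi>
  proof -
    have c0: "continuous_on {0..1} \<phi>" using test_cont[OF \<phi>, of _ 0] by simp
    have c1: "continuous_on {0..1} (deriv \<phi>)" using test_cont[OF \<phi>, of _ 1] by simp
    have D\<phi>: "(\<phi> has_real_derivative deriv \<phi> x) (at x)" for x using test_DERIV[OF \<phi>, of 0 x] by simp
    have e0: "\<phi> 0 = 0" "\<phi> 1 = 0" using test_out[OF \<phi>, of _ 0] by auto
    have "((\<lambda>x. u' x * \<phi> x + deriv \<phi> x * u x) has_integral (u 1 * \<phi> 1 - u 0 * \<phi> 0)) {0..1}"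
    proof (rule fundamental_theorem_of_calculus)
      fix x :: real assume "x \<in> {0..1}"
      show "((\<lambda>x. u x * \<phi> x) has_vector_derivative u' x * \<phi> x + deriv \<phi> x * u x) (at x within {0..1})"
        unfolding has_real_derivative_iff_has_vector_derivative[symmetric]
        by (rule has_field_derivative_at_within[OF DERIV_mult[OF d D\<phi>]])
    qed simp
    then have "integral {0..1} (\<lambda>x. u' x * \<phi> x + u x * deriv \<phi> x) = 0"
      using e0 by (simp add: mult.commute integral_unique)
    moreover have "integral {0..1} (\<lambda>x. u' x * \<phi> x + u x * deriv \<phi> x) =
        integral {0..1} (\<lambda>x. u' x * \<phi> x) + integral {0..1} (\<lambda>x. u x * deriv \<phi> x)"
      by (intro integral_add integrable_continuous_interval continuous_intros uc uc' c0 c1)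
    moreover have "(LINT x:{0<..<1}|lborel. u x * deriv \<phi> x) = integral {0..1} (\<lambda>x. u x * deriv \<phi> x)"
      by (intro LINT_cont(2) continuous_intros uc c1)
    moreover have "(LINT x:{0<..<1}|lborel. u' x * \<phi> x) = integral {0..1} (\<lambda>x. u' x * \<phi> x)"
      by (intro LINT_cont(2) continuous_intros uc' c0)
    ultimately show ?thesis by linarith
  qed
  show ?thesis unfolding weak_deriv_def using li[OF uc] li[OF uc'] eq by blast
qed

lemma cont_L2:
  fixes u :: "real \<Rightarrow> real"
  assumes "continuous_on {0..1} u"
  shows "L2 u"
proof -
  have "continuous_on {0<..<1} u" using assms by (rule continuous_on_subset) auto
  then have "(\<lambda>x. indicator {0<..<1} x *\<^sub>R u x) \<in> borel_measurable borel"
    by (intro borel_measurable_continuous_on_indicator) auto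
  moreover have "set_integrable lborel {0<..<1} (\<lambda>x. (u x)\<^sup>2)"
    by (rule LINT_cont(1)) (intro continuous_intros assms)
  ultimately show ?thesis unfolding L2_def set_borel_measurable_def by simp
qed

lemma C1_H1:
  fixes u u' :: "real \<Rightarrow> real"
  assumes d: "\<And>x. (u has_real_derivative u' x) (at x)" and c: "continuous_on UNIV u'"
  shows "H1 u u'"
proof -
  have uc: "continuous_on S u" for S
    by (rule continuous_at_imp_continuous_on) (use d DERIV_isCont in blast)
  have uc': "continuous_on S u'" for S using c by (rule continuous_on_subset) auto
  show ?thesis unfolding H1_def using cont_L2[OF uc] cont_L2[OF uc'] C1_weak_deriv[OF d c] uc by blast
qed

lemma a_props:
  assumes "WD a \<or> SD a"
  obtains K a' where "0 < K" "K < 2" "\<forall>x\<in>{0<..1}. a x > 0"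
    "\<forall>x\<in>{0<..1}. (a has_real_derivative a' x) (at x within {0..1})"
    "\<forall>x\<in>{0<..1}. x * \<bar>a' x\<bar> / a x \<le> K"
proof -
  have "\<exists>a'. 0 < Sup (Ksup a a') \<and> Sup (Ksup a a') < 2 \<and> (\<forall>x\<in>{0<..1}. a x > 0) \<and>
    (\<forall>x\<in>{0<..1}. (a has_real_derivative a' x) (at x within {0..1})) \<and> bdd_above (Ksup a a')"
  proof (cases "WD a")
    case True
    then obtain a' where "(\<forall>x\<in>{0<..1}. a x > 0)"
      "(\<forall>x\<in>{0<..1}. (a has_real_derivative a' x) (at x within {0..1}))"
      "bdd_above (Ksup a a')" "0 < Sup (Ksup a a')" "Sup (Ksup a a') < 1"
      unfolding WD_def by blast
    then show ?thesis by (intro exI[of _ a']) auto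
  next
    case False
    then have "SD a" using assms by blast
    then obtain a' where "(\<forall>x\<in>{0<..1}. a x > 0)"
      "(\<forall>x\<in>{0..1}. (a has_real_derivative a' x) (at x within {0..1}))"
      "bdd_above (Ksup a a')" "1 \<le> Sup (Ksup a a')" "Sup (Ksup a a') < 2"
      unfolding SD_def by blast
    then show ?thesis by (intro exI[of _ a']) auto
  qed
  then obtain a' where a': "0 < Sup (Ksup a a')" "Sup (Ksup a a') < 2" "\<forall>x\<in>{0<..1}. a x > 0"
    "\<forall>x\<in>{0<..1}. (a has_real_derivative a' x) (at x within {0..1})" "bdd_above (Ksup a a')" by blast
  have "\<forall>x\<in>{0<..1}. x * \<bar>a' x\<bar> / a x \<le> Sup (Ksup a a')"
  proof
    fix x :: real assume "x \<in> {0<..1}"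
    then have "x * \<bar>a' x\<bar> / a x \<in> Ksup a a'" unfolding Ksup_def by auto
    then show "x * \<bar>a' x\<bar> / a x \<le> Sup (Ksup a a')" by (rule cSup_upper[OF _ a'(5)])
  qed
  then show ?thesis using that a' by blast
qed

lemma a_lower:
  fixes a a' :: "real \<Rightarrow> real"
  assumes pos: "\<forall>x\<in>{0<..1}. a x > 0"
    and der: "\<forall>x\<in>{0<..1}. (a has_real_derivative a' x) (at x within {0..1})"
    and K: "\<forall>x\<in>{0<..1}. x * \<bar>a' x\<bar> / a x \<le> K"
    and x: "x \<in> {0<..1}"
  shows "a x \<ge> a 1 * x powr K"
proof -
  define h where "h y = ln (a y) - K * ln y" for y
  have ac: "continuous_on {x..1} a"
  proof (rule continuous_on_subset[of "{0<..1}"])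
    show "continuous_on {0<..1} a"
      unfolding continuous_on_eq_continuous_within
    proof
      fix y :: real assume y: "y \<in> {0<..1}"
      have "continuous (at y within {0..1}) a" using DERIV_continuous der y by blast
      then show "continuous (at y within {0<..1}) a" by (rule continuous_within_subset) auto
    qed
  qed (use x in auto)
  have apos: "\<forall>y\<in>{x..1}. a y > 0"
  proof
    fix y assume "y \<in> {x..1}"
    then have "y \<in> {0<..1}" using x by auto
    then show "a y > 0" using pos by blast
  qed
  have ypos: "\<forall>y\<in>{x..1}. y > 0" using x by auto
  have hc: "continuous_on {x..1} h" unfolding h_def
    by (intro continuous_intros ac) (use apos ypos in fastforce)+
  have hd: "\<exists>D. (h has_real_derivative D) (at y) \<and> D \<le> 0" if y: "x < y" "y < 1" for y
  proof -
    have y0: "y > 0" "y \<in> {0<..1}" using x y by auto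
    have "(a has_real_derivative a' y) (at y within {0..1})" using der y0 by blast
    moreover have "at y within {0..1} = at y" by (rule at_within_interior) (use y0 y in auto)
    ultimately have Da: "(a has_real_derivative a' y) (at y)" by simp
    have ay: "a y > 0" using pos y0 by blast
    have "(h has_real_derivative inverse (a y) * a' y - K * inverse y) (at y)"
      unfolding h_def[abs_def]
      by (rule DERIV_diff[OF DERIV_chain2[OF DERIV_ln[OF ay] Da] DERIV_cmult[OF DERIV_ln[OF y0(1)]]])
    moreover have "inverse (a y) * a' y - K * inverse y \<le> 0"
    proof -
      have "y * \<bar>a' y\<bar> / a y \<le> K" using K y0 by blast
      then have "\<bar>a' y\<bar> / a y \<le> K / y" using y0 ay by (simp add: field_simps)
      moreover have "a' y / a y \<le> \<bar>a' y\<bar> / a y" using ay by (simp add: divide_right_mono)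
      ultimately show ?thesis by (simp add: field_simps)
    qed
    ultimately show ?thesis by blast
  qed
  have "h 1 \<le> h x"
    by (rule DERIV_nonpos_imp_decreasing_open[OF _ hd hc]) (use x in auto)
  then have "ln (a 1) \<le> ln (a x) - K * ln x" unfolding h_def by simp
  then have "exp (ln (a 1) + K * ln x) \<le> exp (ln (a x))" by simp
  moreover have "a x > 0" "a 1 > 0" using pos x by auto
  ultimately have "a 1 * exp (K * ln x) \<le> a x" by (simp add: exp_add)
  then show ?thesis using x by (simp add: powr_def)
qed

lemma hardy:
  fixes a a' :: "real \<Rightarrow> real"
  assumes pos: "\<forall>x\<in>{0<..1}. a x > 0"
    and der: "\<forall>x\<in>{0<..1}. (a has_real_derivative a' x) (at x within {0..1})"
    and K: "\<forall>x\<in>{0<..1}. x * \<bar>a' x\<bar> / a x \<le> K" and K2: "K < 2"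
    and H: "H1a0 a u u'"
  shows "(LINT x:{0<..<1}|lborel. (u x)\<^sup>2 / a x) \<le> (1 / (a 1 * (2 - K))) * (LINT x:{0<..<1}|lborel. (u' x)\<^sup>2)"
proof -
  have H1: "H1 u u'" and u0: "u 0 = 0" and La: "L2a a u" using H unfolding H1a0_def by auto
  have L: "L2 u'" using H1 unfolding H1_def by auto
  define N where "N = integral {0..1} (\<lambda>y. (u' y)\<^sup>2)"
  have N0: "N \<ge> 0" unfolding N_def by (rule integral_nonneg[OF L2_henstock(2)[OF L]]) simp
  have a1: "a 1 > 0" using pos by auto
  have s: "set_integrable lborel {0<..<1} (\<lambda>x. (u x)\<^sup>2 / a x)" using La unfolding L2a_def by auto
  have i1: "(\<lambda>x. (u x)\<^sup>2 / a x) integrable_on {0..1}"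
    using LINT_henstock(2)[OF s] unfolding absolutely_integrable_on_def by auto
  have pint: "((\<lambda>x. x powr (1 - K)) has_integral (1 powr (1 - K + 1) / (1 - K + 1))) {0..1}"
    by (rule has_integral_powr_from_0) (use K2 in auto)
  then have pint2: "((\<lambda>x. N / a 1 * x powr (1 - K)) has_integral (N / a 1 * (1 / (2 - K)))) {0..1}"
    by (intro has_integral_mult_right) simp
  have bound: "(u x)\<^sup>2 / a x \<le> N / a 1 * x powr (1 - K)" if x: "x \<in> {0..1}" for x
  proof (cases "x = 0")
    case True then show ?thesis using u0 by simp
  next
    case False
    then have x0: "x > 0" "x \<in> {0<..1}" using x by auto
    have ax: "a x \<ge> a 1 * x powr K" by (rule a_lower[OF pos der K x0(2)])
    have axp: "a x > 0" using pos x0 by blast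
    have "(u x)\<^sup>2 \<le> x * N" unfolding N_def by (rule H1_sq_bound[OF H1 u0 x])
    then have c1: "(u x)\<^sup>2 / a x \<le> x * N / a x" using axp by (simp add: divide_right_mono)
    have p1: "0 < a 1 * x powr K" using a1 x0 by simp
    have c2: "x * N / a x \<le> x * N / (a 1 * x powr K)"
      by (rule divide_left_mono[OF ax]) (use x0 N0 p1 axp in auto)
    have pw: "x powr (1 - K) = x / x powr K" using x0 by (simp add: powr_diff)
    have pK: "x powr K > 0" using x0 by simp
    have c3: "x * N / (a 1 * x powr K) = N / a 1 * x powr (1 - K)"
      unfolding pw using pK a1 by (simp add: field_simps)
    show ?thesis using c1 c2 c3 by linarith
  qed
  have "integral {0..1} (\<lambda>x. (u x)\<^sup>2 / a x) \<le> integral {0..1} (\<lambda>x. N / a 1 * x powr (1 - K))"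
    by (rule integral_le[OF i1 has_integral_integrable[OF pint2] bound])
  also have "\<dots> = N / a 1 * (1 / (2 - K))" by (rule integral_unique[OF pint2])
  also have "\<dots> = (1 / (a 1 * (2 - K))) * N" by simp
  finally show ?thesis
    using LINT_henstock(1)[OF s] L2_henstock(3)[OF L] unfolding N_def by simp
qed

lemma C_HP_prop:
  assumes "WD a \<or> SD a"
  shows "\<And>u u'. H1a0 a u u' \<Longrightarrow> (LINT x:{0<..<1}|lborel. (u x)\<^sup>2 / a x) \<le> C_HP a * (LINT x:{0<..<1}|lborel. (u' x)\<^sup>2)"
    and "\<And>u u'. H1a0 a u u' \<Longrightarrow> (LINT x:{0<..<1}|lborel. (u' x)\<^sup>2) > 0 \<Longrightarrow>
           (LINT x:{0<..<1}|lborel. (u x)\<^sup>2 / a x) / (LINT x:{0<..<1}|lborel. (u' x)\<^sup>2) \<le> C_HP a"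
proof -
  obtain K a' where K: "0 < K" "K < 2" "\<forall>x\<in>{0<..1}. a x > 0"
    "\<forall>x\<in>{0<..1}. (a has_real_derivative a' x) (at x within {0..1})"
    "\<forall>x\<in>{0<..1}. x * \<bar>a' x\<bar> / a x \<le> K" using a_props[OF assms] by blast
  define S where "S = {C. \<forall>u u'. H1a0 a u u' \<longrightarrow>
      (LINT x:{0<..<1}|lborel. (u x)\<^sup>2 / a x) \<le> C * (LINT x:{0<..<1}|lborel. (u' x)\<^sup>2)}"
  have CS: "C_HP a = Inf S" unfolding C_HP_def S_def ..
  have ne: "S \<noteq> {}"
  proof -
    have "1 / (a 1 * (2 - K)) \<in> S" unfolding S_def using hardy[OF K(3,4,5,2)] by blast
    then show ?thesis by blast
  qed
  show lb: "(LINT x:{0<..<1}|lborel. (u x)\<^sup>2 / a x) / (LINT x:{0<..<1}|lborel. (u' x)\<^sup>2) \<le> C_HP a"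
    if H: "H1a0 a u u'" and J: "(LINT x:{0<..<1}|lborel. (u' x)\<^sup>2) > 0" for u u'
    unfolding CS
  proof (rule cInf_greatest[OF ne])
    fix C assume "C \<in> S"
    then have "(LINT x:{0<..<1}|lborel. (u x)\<^sup>2 / a x) \<le> C * (LINT x:{0<..<1}|lborel. (u' x)\<^sup>2)"
      using H unfolding S_def by blast
    then show "(LINT x:{0<..<1}|lborel. (u x)\<^sup>2 / a x) / (LINT x:{0<..<1}|lborel. (u' x)\<^sup>2) \<le> C"
      using J by (simp add: divide_le_eq)
  qed
  fix u u' assume H: "H1a0 a u u'"
  have L: "L2 u'" using H unfolding H1a0_def H1_def by auto
  have J0: "(LINT x:{0<..<1}|lborel. (u' x)\<^sup>2) \<ge> 0"
    using L2_henstock(3)[OF L] integral_nonneg[OF L2_henstock(2)[OF L]] by simp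
  show "(LINT x:{0<..<1}|lborel. (u x)\<^sup>2 / a x) \<le> C_HP a * (LINT x:{0<..<1}|lborel. (u' x)\<^sup>2)"
  proof (cases "(LINT x:{0<..<1}|lborel. (u' x)\<^sup>2) = 0")
    case True
    obtain C where "C \<in> S" using ne by blast
    then have "(LINT x:{0<..<1}|lborel. (u x)\<^sup>2 / a x) \<le> C * (LINT x:{0<..<1}|lborel. (u' x)\<^sup>2)"
      using H unfolding S_def by blast
    then show ?thesis using True by simp
  next
    case False
    then have "(LINT x:{0<..<1}|lborel. (u' x)\<^sup>2) > 0" using J0 by simp
    then show ?thesis using lb[OF H] by (simp add: divide_le_eq)
  qed
qed

lemma ind_meas:
  "L2 u \<Longrightarrow> (\<lambda>x. indicator {0<..<1} x *\<^sub>R u x) \<in> borel_measurable borel"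
  unfolding L2_def set_borel_measurable_def by simp

lemma L2_diff:
  assumes u: "L2 u" and v: "L2 v"
  shows "L2 (\<lambda>x. u x - v x)"
proof -
  have mu: "(\<lambda>x. indicator {0<..<1} x *\<^sub>R u x) \<in> borel_measurable borel" by (rule ind_meas[OF u])
  have mv: "(\<lambda>x. indicator {0<..<1} x *\<^sub>R v x) \<in> borel_measurable borel" by (rule ind_meas[OF v])
  have e1: "(\<lambda>x. indicator {0<..<1} x *\<^sub>R (u x - v x)) =
      (\<lambda>x. indicator {0<..<1} x *\<^sub>R u x - indicator {0<..<1} x *\<^sub>R v x)"
    by (auto simp: indicator_def)
  have e2: "(\<lambda>x. indicator {0<..<1} x *\<^sub>R (u x - v x)\<^sup>2) =
      (\<lambda>x. (indicator {0<..<1} x *\<^sub>R u x - indicator {0<..<1} x *\<^sub>R v x)\<^sup>2)"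
    by (auto simp: indicator_def)
  have m: "(\<lambda>x. indicator {0<..<1} x *\<^sub>R (u x - v x)) \<in> borel_measurable borel"
    unfolding e1 using mu mv by simp
  have "set_integrable lborel {0<..<1} (\<lambda>x. 2 * (u x)\<^sup>2 + 2 * (v x)\<^sup>2)"
    using u v unfolding L2_def by (intro set_integral_add(1)) auto
  then have "set_integrable lborel {0<..<1} (\<lambda>x. (u x - v x)\<^sup>2)"
  proof (rule set_integrable_bound)
    show "set_borel_measurable lborel {0<..<1} (\<lambda>x. (u x - v x)\<^sup>2)"
      unfolding set_borel_measurable_def e2 using mu mv by simp
    have "(u x - v x)\<^sup>2 \<le> 2 * (u x)\<^sup>2 + 2 * (v x)\<^sup>2" for x
      using zero_le_power2[of "u x + v x"] by (simp add: power2_diff power2_sum)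
    then show "AE x in lborel. x \<in> {0<..<1} \<longrightarrow> norm ((u x - v x)\<^sup>2) \<le> norm (2 * (u x)\<^sup>2 + 2 * (v x)\<^sup>2)"
      by auto
  qed
  then show ?thesis unfolding L2_def set_borel_measurable_def using m by simp
qed

lemma L2_mult:
  assumes u: "L2 u" and v: "L2 v"
  shows "set_integrable lborel {0<..<1} (\<lambda>x. u x * v x)"
proof -
  have mu: "(\<lambda>x. indicator {0<..<1} x *\<^sub>R u x) \<in> borel_measurable borel" by (rule ind_meas[OF u])
  have mv: "(\<lambda>x. indicator {0<..<1} x *\<^sub>R v x) \<in> borel_measurable borel" by (rule ind_meas[OF v])
  have e: "(\<lambda>x. indicator {0<..<1} x *\<^sub>R (u x * v x)) =
      (\<lambda>x. (indicator {0<..<1} x *\<^sub>R u x) * (indicator {0<..<1} x *\<^sub>R v x))"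
    by (auto simp: indicator_def)
  have "set_integrable lborel {0<..<1} (\<lambda>x. (u x)\<^sup>2 + (v x)\<^sup>2)"
    using u v unfolding L2_def by (intro set_integral_add(1)) auto
  then show ?thesis
  proof (rule set_integrable_bound)
    show "set_borel_measurable lborel {0<..<1} (\<lambda>x. u x * v x)"
      unfolding set_borel_measurable_def e using mu mv by simp
    have "\<bar>u x * v x\<bar> \<le> (u x)\<^sup>2 + (v x)\<^sup>2" for x
    proof -
      have "0 \<le> (\<bar>u x\<bar> - \<bar>v x\<bar>)\<^sup>2" by simp
      then have h: "2 * (\<bar>u x\<bar> * \<bar>v x\<bar>) \<le> (u x)\<^sup>2 + (v x)\<^sup>2" by (simp add: power2_diff)
      have p: "0 \<le> \<bar>u x\<bar> * \<bar>v x\<bar>" by simp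
      from h p have "\<bar>u x\<bar> * \<bar>v x\<bar> \<le> (u x)\<^sup>2 + (v x)\<^sup>2" by linarith
      then show ?thesis by (simp add: abs_mult)
    qed
    then show "AE x in lborel. x \<in> {0<..<1} \<longrightarrow> norm (u x * v x) \<le> norm ((u x)\<^sup>2 + (v x)\<^sup>2)"
      by auto
  qed
qed

lemma H1_diff:
  assumes u: "H1 u u'" and v: "H1 v v'"
  shows "H1 (\<lambda>x. u x - v x) (\<lambda>x. u' x - v' x)"
proof -
  have uc: "continuous_on {0..1} u" and vc: "continuous_on {0..1} v"
    and Lu: "L2 u" "L2 u'" and Lv: "L2 v" "L2 v'"
    and wu: "weak_deriv u u'" and wv: "weak_deriv v v'"
    using u v unfolding H1_def by auto
  have li: "loc_int (\<lambda>x. f x - g x)" if "loc_int f" "loc_int g" for f g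
    using that unfolding loc_int_def by (auto intro: set_integral_diff(1))
  have eq: "(LINT x:{0<..<1}|lborel. (u x - v x) * deriv \<phi> x) = - (LINT x:{0<..<1}|lborel. (u' x - v' x) * \<phi> x)"
    if \<phi>: "test_fun \<phi>" for \<phi>
  proof -
    have c0: "continuous_on {0..1} \<phi>" using test_cont[OF \<phi>, of _ 0] by simp
    have c1: "continuous_on {0..1} (deriv \<phi>)" using test_cont[OF \<phi>, of _ 1] by simp
    have i1: "set_integrable lborel {0<..<1} (\<lambda>x. u x * deriv \<phi> x)"
      by (rule LINT_cont(1)) (intro continuous_intros uc c1)
    have i2: "set_integrable lborel {0<..<1} (\<lambda>x. v x * deriv \<phi> x)"
      by (rule LINT_cont(1)) (intro continuous_intros vc c1)
    have i3: "set_integrable lborel {0<..<1} (\<lambda>x. u' x * \<phi> x)"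
      by (rule set_integrable_bounded_mult[OF L2_L1[OF Lu(2)] c0])
    have i4: "set_integrable lborel {0<..<1} (\<lambda>x. v' x * \<phi> x)"
      by (rule set_integrable_bounded_mult[OF L2_L1[OF Lv(2)] c0])
    have "(LINT x:{0<..<1}|lborel. (u x - v x) * deriv \<phi> x) =
        (LINT x:{0<..<1}|lborel. u x * deriv \<phi> x - v x * deriv \<phi> x)"
      by (simp add: left_diff_distrib)
    also have "\<dots> = (LINT x:{0<..<1}|lborel. u x * deriv \<phi> x) - (LINT x:{0<..<1}|lborel. v x * deriv \<phi> x)"
      by (rule set_integral_diff(2)[OF i1 i2])
    also have "\<dots> = - (LINT x:{0<..<1}|lborel. u' x * \<phi> x) + (LINT x:{0<..<1}|lborel. v' x * \<phi> x)"
      using wu wv \<phi> unfolding weak_deriv_def by simp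
    also have "\<dots> = - ((LINT x:{0<..<1}|lborel. u' x * \<phi> x) - (LINT x:{0<..<1}|lborel. v' x * \<phi> x))"
      by simp
    also have "(LINT x:{0<..<1}|lborel. u' x * \<phi> x) - (LINT x:{0<..<1}|lborel. v' x * \<phi> x) =
        (LINT x:{0<..<1}|lborel. u' x * \<phi> x - v' x * \<phi> x)"
      by (rule set_integral_diff(2)[OF i3 i4, symmetric])
    also have "\<dots> = (LINT x:{0<..<1}|lborel. (u' x - v' x) * \<phi> x)"
      by (simp add: left_diff_distrib)
    finally show ?thesis .
  qed
  have "weak_deriv (\<lambda>x. u x - v x) (\<lambda>x. u' x - v' x)"
    unfolding weak_deriv_def using li wu wv eq unfolding weak_deriv_def by blast
  then show ?thesis unfolding H1_def using L2_diff[OF Lu(1) Lv(1)] L2_diff[OF Lu(2) Lv(2)]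
    by (auto intro!: continuous_intros uc vc)
qed

lemma L2a_diff:
  fixes a :: "real \<Rightarrow> real"
  assumes u: "L2a a u" and v: "L2a a v" and pos: "\<forall>x\<in>{0<..<1}. a x > 0"
    and ac: "continuous_on {0<..<1} a"
  shows "L2a a (\<lambda>x. u x - v x)"
proof -
  have Lu: "L2 u" and Lv: "L2 v" using u v unfolding L2a_def by auto
  have mu: "(\<lambda>x. indicator {0<..<1} x *\<^sub>R u x) \<in> borel_measurable borel" by (rule ind_meas[OF Lu])
  have mv: "(\<lambda>x. indicator {0<..<1} x *\<^sub>R v x) \<in> borel_measurable borel" by (rule ind_meas[OF Lv])
  have ma: "(\<lambda>x. indicator {0<..<1} x *\<^sub>R a x) \<in> borel_measurable borel"
    by (rule borel_measurable_continuous_on_indicator[OF _ ac]) simp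
  have e: "(\<lambda>x. indicator {0<..<1} x *\<^sub>R ((u x - v x)\<^sup>2 / a x)) =
      (\<lambda>x. (indicator {0<..<1} x *\<^sub>R u x - indicator {0<..<1} x *\<^sub>R v x)\<^sup>2 / (indicator {0<..<1} x *\<^sub>R a x))"
    by (auto simp: indicator_def)
  have su: "set_integrable lborel {0<..<1} (\<lambda>x. 2 * ((u x)\<^sup>2 / a x))"
    by (rule set_integrable_mult_right) (use u in \<open>simp add: L2a_def\<close>)
  have sv: "set_integrable lborel {0<..<1} (\<lambda>x. 2 * ((v x)\<^sup>2 / a x))"
    by (rule set_integrable_mult_right) (use v in \<open>simp add: L2a_def\<close>)
  have "set_integrable lborel {0<..<1} (\<lambda>x. 2 * ((u x)\<^sup>2 / a x) + 2 * ((v x)\<^sup>2 / a x))"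
    by (rule set_integral_add(1)[OF su sv])
  then have "set_integrable lborel {0<..<1} (\<lambda>x. (u x - v x)\<^sup>2 / a x)"
  proof (rule set_integrable_bound)
    show "set_borel_measurable lborel {0<..<1} (\<lambda>x. (u x - v x)\<^sup>2 / a x)"
      unfolding set_borel_measurable_def e using mu mv ma by simp
    have "norm ((u x - v x)\<^sup>2 / a x) \<le> norm (2 * ((u x)\<^sup>2 / a x) + 2 * ((v x)\<^sup>2 / a x))"
      if x: "x \<in> {0<..<1}" for x
    proof -
      have ax: "a x > 0" using pos x by blast
      have "(u x - v x)\<^sup>2 \<le> 2 * (u x)\<^sup>2 + 2 * (v x)\<^sup>2"
        using zero_le_power2[of "u x + v x"] by (simp add: power2_diff power2_sum)
      then have "(u x - v x)\<^sup>2 / a x \<le> (2 * (u x)\<^sup>2 + 2 * (v x)\<^sup>2) / a x"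
        using ax by (simp add: divide_right_mono)
      moreover have "0 \<le> (u x - v x)\<^sup>2 / a x" using ax by simp
      ultimately show ?thesis using ax by (simp add: add_divide_distrib)
    qed
    then show "AE x in lborel. x \<in> {0<..<1} \<longrightarrow> norm ((u x - v x)\<^sup>2 / a x) \<le> norm (2 * ((u x)\<^sup>2 / a x) + 2 * ((v x)\<^sup>2 / a x))"
      by auto
  qed
  then show ?thesis unfolding L2a_def using L2_diff[OF Lu Lv] by simp
qed

lemma H2a0_diff:
  fixes a :: "real \<Rightarrow> real"
  assumes z: "H2a0 a z z1 z2" and y: "H2a0 a y y1 y2" and pos: "\<forall>x\<in>{0<..<1}. a x > 0"
    and ac: "continuous_on {0<..<1} a"
  shows "H2a0 a (\<lambda>x. z x - y x) (\<lambda>x. z1 x - y1 x) (\<lambda>x. z2 x - y2 x)"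
  using z y H1_diff L2a_diff[OF _ _ pos ac] unfolding H2a0_def H1a0_def by auto

lemma H2_facts:
  assumes H: "H2a0 a z z1 z2"
  shows "(LINT x:{0<..<1}|lborel. (z2 x)\<^sup>2) = integral {0..1} (\<lambda>x. (z2 x)\<^sup>2)"
    and "integral {0..1} (\<lambda>x. (z2 x)\<^sup>2) \<ge> 0"
    and "\<And>x. x \<in> {0..1} \<Longrightarrow> (z1 x)\<^sup>2 \<le> x * integral {0..1} (\<lambda>x. (z2 x)\<^sup>2)"
    and "(z 1)\<^sup>2 \<le> integral {0..1} (\<lambda>x. (z2 x)\<^sup>2)"
    and "(z1 1)\<^sup>2 \<le> integral {0..1} (\<lambda>x. (z2 x)\<^sup>2)"
proof -
  have H1: "H1 z z1" and H2: "H1 z1 z2" and z0: "z 0 = 0" and z10: "z1 0 = 0"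
    using H unfolding H2a0_def H1a0_def by auto
  have L: "L2 z2" using H2 unfolding H1_def by auto
  have c1: "continuous_on {0..1} z1" using H2 unfolding H1_def by auto
  define N where "N = integral {0..1} (\<lambda>x. (z2 x)\<^sup>2)"
  show "(LINT x:{0<..<1}|lborel. (z2 x)\<^sup>2) = integral {0..1} (\<lambda>x. (z2 x)\<^sup>2)" by (rule L2_henstock(3)[OF L])
  show N0: "integral {0..1} (\<lambda>x. (z2 x)\<^sup>2) \<ge> 0" by (rule integral_nonneg[OF L2_henstock(2)[OF L]]) simp
  show b1: "(z1 x)\<^sup>2 \<le> x * integral {0..1} (\<lambda>x. (z2 x)\<^sup>2)" if "x \<in> {0..1}" for x
    by (rule H1_sq_bound[OF H2 z10 that])
  have b1': "(z1 x)\<^sup>2 \<le> N" if "x \<in> {0..1}" for x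
  proof -
    have "(z1 x)\<^sup>2 \<le> x * N" using b1[OF that] unfolding N_def .
    also have "\<dots> \<le> 1 * N" using that N0 unfolding N_def by (intro mult_right_mono) auto
    finally show ?thesis by simp
  qed
  then show "(z1 1)\<^sup>2 \<le> integral {0..1} (\<lambda>x. (z2 x)\<^sup>2)" unfolding N_def by simp
  have "z 1 = integral {0..1} z1" using H1_FTC[OF H1, of 1] z0 by simp
  then have "(z 1)\<^sup>2 \<le> 1 * integral {0..1} (\<lambda>x. (z1 x)\<^sup>2)"
    using CS_int[of z1 1] by (simp add: integrable_continuous_interval c1 continuous_intros)
  also have "\<dots> \<le> integral {0..1} (\<lambda>x::real. N)"
  proof -
    have "integral {0..1} (\<lambda>x. (z1 x)\<^sup>2) \<le> integral {0..1} (\<lambda>x::real. N)"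
    proof (rule integral_le)
      show "(\<lambda>x. (z1 x)\<^sup>2) integrable_on {0..1}" by (intro integrable_continuous_interval continuous_intros c1)
      show "(\<lambda>x::real. N) integrable_on {0..1}" by (rule integrable_const_ivl)
      show "\<And>x. x \<in> {0..1} \<Longrightarrow> (z1 x)\<^sup>2 \<le> N" by (rule b1')
    qed
    then show ?thesis by simp
  qed
  also have "\<dots> = N" by simp
  finally show "(z 1)\<^sup>2 \<le> integral {0..1} (\<lambda>x. (z2 x)\<^sup>2)" unfolding N_def .
qed

lemma H2_zero:
  assumes H: "H2a0 a z z1 z2" and N: "integral {0..1} (\<lambda>x. (z2 x)\<^sup>2) = 0"
  shows "\<forall>x\<in>{0..1}. z x = 0"
proof
  fix x :: real assume x: "x \<in> {0..1}"
  have H1: "H1 z z1" and z0: "z 0 = 0" using H unfolding H2a0_def H1a0_def by auto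
  have "(z1 y)\<^sup>2 \<le> 0" if "y \<in> {0..x}" for y
    using H2_facts(3)[OF H, of y] N that x by auto
  then have "z1 y = 0" if "y \<in> {0..x}" for y
  proof -
    have "(z1 y)\<^sup>2 \<le> 0" using \<open>\<And>y. y \<in> {0..x} \<Longrightarrow> (z1 y)\<^sup>2 \<le> 0\<close> that .
    moreover have "0 \<le> (z1 y)\<^sup>2" by simp
    ultimately have "(z1 y)\<^sup>2 = 0" by linarith
    then show ?thesis by simp
  qed
  then have "integral {0..x} z1 = integral {0..x} (\<lambda>y. 0)" by (intro integral_cong) auto
  then show "z x = 0" using H1_FTC[OF H1 x] z0 by simp
qed

lemma a_cont:
  fixes a a' :: "real \<Rightarrow> real"
  assumes der: "\<forall>x\<in>{0<..1}. (a has_real_derivative a' x) (at x within {0..1})"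
  shows "continuous_on {0<..<1} a"
proof (rule continuous_at_imp_continuous_on, rule ballI)
  fix y :: real assume y: "y \<in> {0<..<1}"
  have "(a has_real_derivative a' y) (at y within {0..1})" using der y by auto
  moreover have "at y within {0..1} = at y" by (rule at_within_interior) (use y in auto)
  ultimately have "(a has_real_derivative a' y) (at y)" by simp
  then show "isCont a y" by (rule DERIV_isCont)
qed

lemma L2a_poly:
  fixes a a' u :: "real \<Rightarrow> real"
  assumes pos: "\<forall>x\<in>{0<..1}. a x > 0"
    and der: "\<forall>x\<in>{0<..1}. (a has_real_derivative a' x) (at x within {0..1})"
    and K: "\<forall>x\<in>{0<..1}. x * \<bar>a' x\<bar> / a x \<le> K" and K2: "K < 2"
    and uc: "continuous_on {0..1} u" and ub: "\<And>x. x \<in> {0<..<1} \<Longrightarrow> \<bar>u x\<bar> \<le> M * x\<^sup>2"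
  shows "set_integrable lborel {0<..<1} (\<lambda>x. (u x)\<^sup>2 / a x)"
proof -
  have ac: "continuous_on {0<..<1} a" by (rule a_cont[OF der])
  have a1: "a 1 > 0" using pos by auto
  have uc': "continuous_on {0<..<1} u" using uc by (rule continuous_on_subset) auto
  have mu: "(\<lambda>x. indicator {0<..<1} x *\<^sub>R u x) \<in> borel_measurable borel"
    by (rule borel_measurable_continuous_on_indicator[OF _ uc']) simp
  have ma: "(\<lambda>x. indicator {0<..<1} x *\<^sub>R a x) \<in> borel_measurable borel"
    by (rule borel_measurable_continuous_on_indicator[OF _ ac]) simp
  have e: "(\<lambda>x. indicator {0<..<1} x *\<^sub>R ((u x)\<^sup>2 / a x)) =
      (\<lambda>x. (indicator {0<..<1} x *\<^sub>R u x)\<^sup>2 / (indicator {0<..<1} x *\<^sub>R a x))"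
    by (auto simp: indicator_def)
  have c: "set_integrable lborel {0<..<1::real} (\<lambda>x. M\<^sup>2 / a 1)"
    unfolding set_integrable_def by (rule integrable_indicator) (simp_all add: greaterThanLessThan_borel)
  then show ?thesis
  proof (rule set_integrable_bound)
    show "set_borel_measurable lborel {0<..<1} (\<lambda>x. (u x)\<^sup>2 / a x)"
      unfolding set_borel_measurable_def e using mu ma by simp
    have "norm ((u x)\<^sup>2 / a x) \<le> norm (M\<^sup>2 / a 1)" if x: "x \<in> {0<..<1}" for x
    proof -
      have x0: "0 < x" "x \<in> {0<..1}" "x \<le> 1" using x by auto
      have ax: "a x \<ge> a 1 * x powr K" by (rule a_lower[OF pos der K x0(2)])
      have "x powr 2 \<le> x powr K" by (rule powr_mono') (use x0 K2 in auto)
      then have "x\<^sup>2 \<le> x powr K" using x0 by simp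
      then have ax2: "a x \<ge> a 1 * x\<^sup>2" using ax a1 by (meson mult_left_mono less_imp_le order_trans)
      have axp: "a x > 0" using pos x0 by blast
      have x2p: "x\<^sup>2 > 0" using x0 by simp
      have u2: "(u x)\<^sup>2 \<le> M\<^sup>2 * (x\<^sup>2)\<^sup>2"
      proof -
        have "\<bar>u x\<bar> \<le> M * x\<^sup>2" by (rule ub[OF x])
        then have "\<bar>u x\<bar>\<^sup>2 \<le> (M * x\<^sup>2)\<^sup>2" by (rule power_mono) simp
        then show ?thesis by (simp add: power_mult_distrib)
      qed
      have "(u x)\<^sup>2 / a x \<le> M\<^sup>2 * (x\<^sup>2)\<^sup>2 / a x" using u2 axp by (simp add: divide_right_mono)
      also have "\<dots> \<le> M\<^sup>2 * (x\<^sup>2)\<^sup>2 / (a 1 * x\<^sup>2)"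
        by (rule divide_left_mono[OF ax2]) (use a1 x2p axp in auto)
      also have "\<dots> = M\<^sup>2 * x\<^sup>2 / a 1" using x2p a1 by (simp add: field_simps power2_eq_square)
      also have "\<dots> \<le> M\<^sup>2 * 1 / a 1"
        using x0 a1 by (intro divide_right_mono mult_left_mono) (auto simp: power_le_one)
      finally have "(u x)\<^sup>2 / a x \<le> M\<^sup>2 / a 1" by simp
      moreover have "0 \<le> (u x)\<^sup>2 / a x" using axp by simp
      ultimately show ?thesis using axp a1 by simp
    qed
    then show "AE x in lborel. x \<in> {0<..<1} \<longrightarrow> norm ((u x)\<^sup>2 / a x) \<le> norm (M\<^sup>2 / a 1)" by auto
  qed
qed

lemma solve_AB:
  fixes \<beta> \<gamma> lam mu :: real
  assumes "\<beta> \<ge> 0" "\<gamma> \<ge> 0"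
  shows "\<exists>A B. \<beta> * (A + B) - 6 * B = lam \<and> 2 * A + 6 * B + \<gamma> * (2 * A + 3 * B) = mu"
proof -
  define D where "D = 4 * \<beta> + \<beta> * \<gamma> + 12 + 12 * \<gamma>"
  have "\<beta> * \<gamma> \<ge> 0" using assms by simp
  then have D: "D > 0" using assms unfolding D_def by linarith
  define A where "A = (lam * (6 + 3 * \<gamma>) - (\<beta> - 6) * mu) / D"
  define B where "B = (\<beta> * mu - (2 + 2 * \<gamma>) * lam) / D"
  have "\<beta> * (A + B) - 6 * B = (\<beta> * (lam * (6 + 3 * \<gamma>) - (\<beta> - 6) * mu) + (\<beta> - 6) * (\<beta> * mu - (2 + 2 * \<gamma>) * lam)) / D"
    unfolding A_def B_def using D by (simp add: field_simps)
  also have "\<dots> = lam * D / D" unfolding D_def by (simp add: algebra_simps)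
  finally have e1: "\<beta> * (A + B) - 6 * B = lam" using D by simp
  have "2 * A + 6 * B + \<gamma> * (2 * A + 3 * B) = ((2 + 2 * \<gamma>) * (lam * (6 + 3 * \<gamma>) - (\<beta> - 6) * mu) + (6 + 3 * \<gamma>) * (\<beta> * mu - (2 + 2 * \<gamma>) * lam)) / D"
    unfolding A_def B_def using D by (simp add: field_simps)
  also have "\<dots> = mu * D / D" unfolding D_def by (simp add: algebra_simps)
  finally have e2: "2 * A + 6 * B + \<gamma> * (2 * A + 3 * B) = mu" using D by simp
  show ?thesis using e1 e2 by blast
qed

lemma var_sol_poly:
  fixes A B \<beta> \<gamma> lam mu :: real
  assumes e1: "\<beta> * (A + B) - 6 * B = lam" and e2: "2 * A + 6 * B + \<gamma> * (2 * A + 3 * B) = mu"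
    and H: "H2a0 a \<phi> \<phi>1 \<phi>2"
  shows "(LINT x:{0<..<1}|lborel. (2 * A + 6 * B * x) * \<phi>2 x) + \<beta> * (A + B) * \<phi> 1 + \<gamma> * (2 * A + 3 * B) * \<phi>1 1
     = lam * \<phi> 1 + mu * \<phi>1 1"
proof -
  have H1: "H1 \<phi> \<phi>1" and H2: "H1 \<phi>1 \<phi>2" and z0: "\<phi> 0 = 0" and z10: "\<phi>1 0 = 0"
    using H unfolding H2a0_def H1a0_def by auto
  have L: "L2 \<phi>2" using H2 unfolding H1_def by auto
  have wa: "\<phi>2 absolutely_integrable_on {0..1}" by (rule L2_henstock(1)[OF L])
  have wi: "\<phi>2 integrable_on {0..1}" using wa unfolding absolutely_integrable_on_def by auto
  have xw: "(\<lambda>x. x * \<phi>2 x) integrable_on {0..1}"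
  proof -
    have "(\<lambda>x. x * \<phi>2 x) absolutely_integrable_on {0..1}"
      by (rule absolutely_integrable_bounded_measurable_product_real[OF continuous_imp_measurable_on_sets_lebesgue _ _ wa])
         (auto intro!: continuous_intros simp: bounded_iff intro!: exI[of _ 1])
    then show ?thesis unfolding absolutely_integrable_on_def by auto
  qed
  have I0: "integral {0..1} \<phi>2 = \<phi>1 1" using H1_FTC[OF H2, of 1] z10 by simp
  have I1: "integral {0..1} (\<lambda>x. x * \<phi>2 x) = \<phi>1 1 - \<phi> 1"
    using H1_IBP[OF H2] H1_FTC[OF H1, of 1] z0 by simp
  have si: "set_integrable lborel {0<..<1} (\<lambda>x. \<phi>2 x * (2 * A + 6 * B * x))"
    by (rule set_integrable_bounded_mult[OF L2_L1[OF L]]) (intro continuous_intros)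
  have "(LINT x:{0<..<1}|lborel. (2 * A + 6 * B * x) * \<phi>2 x) = (LINT x:{0<..<1}|lborel. \<phi>2 x * (2 * A + 6 * B * x))"
    by (simp add: mult.commute)
  also have "\<dots> = integral {0..1} (\<lambda>x. \<phi>2 x * (2 * A + 6 * B * x))" by (rule LINT_henstock(1)[OF si])
  also have "\<dots> = integral {0..1} (\<lambda>x. 2 * A * \<phi>2 x + 6 * B * (x * \<phi>2 x))"
    by (rule integral_cong) (simp add: algebra_simps)
  also have "\<dots> = 2 * A * integral {0..1} \<phi>2 + 6 * B * integral {0..1} (\<lambda>x. x * \<phi>2 x)"
    by (rule integral_unique, intro has_integral_add has_integral_mult_right integrable_integral wi xw)
  finally have "(LINT x:{0<..<1}|lborel. (2 * A + 6 * B * x) * \<phi>2 x) = 2 * A * \<phi>1 1 + 6 * B * (\<phi>1 1 - \<phi> 1)"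
    using I0 I1 by simp
  moreover have "2 * A * \<phi>1 1 + 6 * B * (\<phi>1 1 - \<phi> 1) + \<beta> * (A + B) * \<phi> 1 + \<gamma> * (2 * A + 3 * B) * \<phi>1 1
      = (\<beta> * (A + B) - 6 * B) * \<phi> 1 + (2 * A + 6 * B + \<gamma> * (2 * A + 3 * B)) * \<phi>1 1"
    by (simp add: algebra_simps)
  ultimately show ?thesis using e1 e2 by simp
qed

lemma poly_fourth:
  fixes A B :: real
  assumes \<phi>: "test_fun \<phi>"
  shows "(LINT x:{0<..<1}|lborel. (A * x\<^sup>2 + B * x ^ 3) * (deriv ^^ 4) \<phi> x) = 0"
proof -
  define P where "P k = (deriv ^^ k) \<phi>" for k
  have DP: "(P k has_real_derivative P (Suc k) x) (at x)" for k x unfolding P_def by (rule test_DERIV[OF \<phi>])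
  have cP: "continuous_on S (P k)" for k S unfolding P_def by (rule test_cont[OF \<phi>])
  have P01: "P k 0 = 0" "P k 1 = 0" for k unfolding P_def using test_out[OF \<phi>] by auto
  define z where "z x = A * x\<^sup>2 + B * x ^ 3" for x :: real
  define z1 where "z1 x = 2 * A * x + 3 * B * x\<^sup>2" for x :: real
  define z2 where "z2 x = 2 * A + 6 * B * x" for x :: real
  have Dz: "(z has_real_derivative z1 x) (at x)" for x
    unfolding z_def[abs_def] z1_def by (auto intro!: derivative_eq_intros simp: power2_eq_square)
  have Dz1: "(z1 has_real_derivative z2 x) (at x)" for x
    unfolding z1_def[abs_def] z2_def by (auto intro!: derivative_eq_intros simp: power2_eq_square)
  have Dz2: "(z2 has_real_derivative 6 * B) (at x)" for x
    unfolding z2_def[abs_def] by (auto intro!: derivative_eq_intros)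
  define F where "F x = z x * P 3 x - z1 x * P 2 x + z2 x * P 1 x - 6 * B * P 0 x" for x
  have DF: "(F has_real_derivative z x * P 4 x) (at x)" for x
  proof -
    have "(F has_real_derivative
        ((z1 x * P 3 x + z x * P 4 x) - (z2 x * P 2 x + z1 x * P 3 x) + (6 * B * P 1 x + z2 x * P 2 x) - 6 * B * P 1 x)) (at x)"
      unfolding F_def[abs_def]
      by (intro DERIV_diff DERIV_add DERIV_cmult)
         (rule DERIV_cong[OF DERIV_mult[OF Dz DP]], simp add: algebra_simps numeral_eq_Suc,
          rule DERIV_cong[OF DERIV_mult[OF Dz1 DP]], simp add: algebra_simps numeral_eq_Suc,
          rule DERIV_cong[OF DERIV_mult[OF Dz2 DP]], simp add: algebra_simps numeral_eq_Suc,
          rule DERIV_cong[OF DP], simp add: numeral_eq_Suc)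
    then show ?thesis by (simp add: algebra_simps)
  qed
  have "((\<lambda>x. z x * P 4 x) has_integral (F 1 - F 0)) {0..1}"
    by (rule fundamental_theorem_of_calculus)
       (auto simp: has_real_derivative_iff_has_vector_derivative[symmetric] intro: has_field_derivative_at_within[OF DF])
  moreover have "F 1 - F 0 = 0" unfolding F_def using P01 by simp
  ultimately have "integral {0..1} (\<lambda>x. z x * P 4 x) = 0" by (simp add: integral_unique)
  moreover have "(LINT x:{0<..<1}|lborel. z x * P 4 x) = integral {0..1} (\<lambda>x. z x * P 4 x)"
    by (rule LINT_cont(2)) (unfold z_def, intro continuous_intros cP)
  ultimately show ?thesis unfolding z_def P_def by simp
qed

lemma uniqueness:
  fixes a :: "real \<Rightarrow> real"
  assumes WS: "WD a \<or> SD a" and \<beta>: "\<beta> \<ge> 0" and \<gamma>: "\<gamma> \<ge> 0"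
    and vz: "var_sol a \<beta> \<gamma> lam mu z z1 z2" and vy: "var_sol a \<beta> \<gamma> lam mu y y1 y2"
  shows "\<forall>x\<in>{0..1}. z x = y x"
proof -
  obtain K a' where K: "0 < K" "K < 2" "\<forall>x\<in>{0<..1}. a x > 0"
    "\<forall>x\<in>{0<..1}. (a has_real_derivative a' x) (at x within {0..1})"
    "\<forall>x\<in>{0<..1}. x * \<bar>a' x\<bar> / a x \<le> K" using a_props[OF WS] by blast
  have pos01: "\<forall>x\<in>{0<..<1}. a x > 0" using K(3) by auto
  have ac: "continuous_on {0<..<1} a" by (rule a_cont[OF K(4)])
  have Hz: "H2a0 a z z1 z2" and Hy: "H2a0 a y y1 y2" using vz vy unfolding var_sol_def by auto
  define d where "d x = z x - y x" for x
  define d1 where "d1 x = z1 x - y1 x" for x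
  define d2 where "d2 x = z2 x - y2 x" for x
  have Hd: "H2a0 a d d1 d2" unfolding d_def[abs_def] d1_def[abs_def] d2_def[abs_def]
    by (rule H2a0_diff[OF Hz Hy pos01 ac])
  have Vz: "(LINT x:{0<..<1}|lborel. z2 x * d2 x) + \<beta> * z 1 * d 1 + \<gamma> * z1 1 * d1 1 = lam * d 1 + mu * d1 1"
    using vz Hd unfolding var_sol_def by blast
  have Vy: "(LINT x:{0<..<1}|lborel. y2 x * d2 x) + \<beta> * y 1 * d 1 + \<gamma> * y1 1 * d1 1 = lam * d 1 + mu * d1 1"
    using vy Hd unfolding var_sol_def by blast
  have Lz2: "L2 z2" using Hz unfolding H2a0_def H1_def by auto
  have Ly2: "L2 y2" using Hy unfolding H2a0_def H1_def by auto
  have Ld2: "L2 d2" using Hd unfolding H2a0_def H1_def by auto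
  have "(LINT x:{0<..<1}|lborel. z2 x * d2 x) - (LINT x:{0<..<1}|lborel. y2 x * d2 x)
      = (LINT x:{0<..<1}|lborel. z2 x * d2 x - y2 x * d2 x)"
    by (rule set_integral_diff(2)[OF L2_mult[OF Lz2 Ld2] L2_mult[OF Ly2 Ld2], symmetric])
  also have "\<dots> = (LINT x:{0<..<1}|lborel. (d2 x)\<^sup>2)"
    unfolding d2_def by (simp add: power2_eq_square left_diff_distrib)
  finally have "(LINT x:{0<..<1}|lborel. (d2 x)\<^sup>2) + \<beta> * (d 1)\<^sup>2 + \<gamma> * (d1 1)\<^sup>2 = 0"
    using Vz Vy unfolding d_def d1_def by (simp add: power2_eq_square algebra_simps)
  moreover have "\<beta> * (d 1)\<^sup>2 \<ge> 0" "\<gamma> * (d1 1)\<^sup>2 \<ge> 0" using \<beta> \<gamma> by simp_all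
  moreover have "(LINT x:{0<..<1}|lborel. (d2 x)\<^sup>2) \<ge> 0" using H2_facts(1,2)[OF Hd] by simp
  ultimately have "integral {0..1} (\<lambda>x. (d2 x)\<^sup>2) = 0" using H2_facts(1)[OF Hd] by linarith
  then have "\<forall>x\<in>{0..1}. d x = 0" by (rule H2_zero[OF Hd])
  then show ?thesis unfolding d_def by simp
qed

lemma existence:
  fixes a :: "real \<Rightarrow> real" and \<beta> \<gamma> lam mu :: real
  assumes WS: "WD a \<or> SD a" and \<beta>: "\<beta> \<ge> 0" and \<gamma>: "\<gamma> \<ge> 0"
  shows "\<exists>z z1 z2. var_sol a \<beta> \<gamma> lam mu z z1 z2
               \<and> (LINT x:{0<..<1}|lborel. (z x)\<^sup>2 / a x) \<le> (4 * C_HP a + 1) * (\<bar>lam\<bar> + \<bar>mu\<bar>)\<^sup>2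
               \<and> (tnorm \<beta> \<gamma> z z1 z2)\<^sup>2 \<le> (\<bar>lam\<bar> + \<bar>mu\<bar>)\<^sup>2
               \<and> (\<exists>w. DA a z z1 z2 w \<and> (AE x in lborel. x \<in> {0<..<1} \<longrightarrow> a x * w x = 0))
               \<and> (\<exists>z2' z3. (AE x in lborel. x \<in> {0<..<1} \<longrightarrow> z2' x = z2 x)
                    \<and> continuous_on {0<..1} z2' \<and> continuous_on {0<..1} z3
                    \<and> weak_deriv z2' z3
                    \<and> \<beta> * z 1 - z3 1 = lam \<and> \<gamma> * z1 1 + z2' 1 = mu)"
proof -
  obtain K a' where K: "0 < K" "K < 2" "\<forall>x\<in>{0<..1}. a x > 0"
    "\<forall>x\<in>{0<..1}. (a has_real_derivative a' x) (at x within {0..1})"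
    "\<forall>x\<in>{0<..1}. x * \<bar>a' x\<bar> / a x \<le> K" using a_props[OF WS] by blast
  obtain A B where e1: "\<beta> * (A + B) - 6 * B = lam" and e2: "2 * A + 6 * B + \<gamma> * (2 * A + 3 * B) = mu"
    using solve_AB[OF \<beta> \<gamma>] by blast
  define z where "z x = A * x\<^sup>2 + B * x ^ 3" for x :: real
  define z1 where "z1 x = 2 * A * x + 3 * B * x\<^sup>2" for x :: real
  define z2 where "z2 x = 2 * A + 6 * B * x" for x :: real
  define z3 where "z3 x = 6 * B" for x :: real
  have Dz: "(z has_real_derivative z1 x) (at x)" for x
    unfolding z_def[abs_def] z1_def by (auto intro!: derivative_eq_intros simp: power2_eq_square)
  have Dz1: "(z1 has_real_derivative z2 x) (at x)" for x
    unfolding z1_def[abs_def] z2_def by (auto intro!: derivative_eq_intros simp: power2_eq_square)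
  have Dz2: "(z2 has_real_derivative z3 x) (at x)" for x
    unfolding z2_def[abs_def] z3_def by (auto intro!: derivative_eq_intros)
  have cz: "continuous_on S z" for S unfolding z_def by (intro continuous_intros)
  have cz1: "continuous_on S z1" for S unfolding z1_def by (intro continuous_intros)
  have cz2: "continuous_on S z2" for S unfolding z2_def by (intro continuous_intros)
  have cz3: "continuous_on S z3" for S unfolding z3_def by (intro continuous_intros)
  have H1z: "H1 z z1" by (rule C1_H1[OF Dz cz1])
  have H1z1: "H1 z1 z2" by (rule C1_H1[OF Dz1 cz2])
  have wd2: "weak_deriv z2 z3" by (rule C1_weak_deriv[OF Dz2 cz3])
  have ub: "\<bar>z x\<bar> \<le> (\<bar>A\<bar> + \<bar>B\<bar>) * x\<^sup>2" if x: "x \<in> {0<..<1}" for x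
  proof -
    have x0: "0 < x" "x \<le> 1" using x by auto
    have x3: "x ^ 3 \<le> x\<^sup>2" using x0 by (simp add: power_decreasing)
    have "\<bar>z x\<bar> = \<bar>A * x\<^sup>2 + B * x ^ 3\<bar>" by (simp add: z_def)
    also have "\<dots> \<le> \<bar>A * x\<^sup>2\<bar> + \<bar>B * x ^ 3\<bar>" by (rule abs_triangle_ineq)
    also have "\<dots> = \<bar>A\<bar> * x\<^sup>2 + \<bar>B\<bar> * x ^ 3" using x0 by (simp add: abs_mult)
    also have "\<dots> \<le> \<bar>A\<bar> * x\<^sup>2 + \<bar>B\<bar> * x\<^sup>2" using x3 by (simp add: mult_left_mono)
    finally show ?thesis by (simp add: algebra_simps)
  qed
  have L2az: "L2a a z"
    unfolding L2a_def using H1z L2a_poly[OF K(3,4,5,2) cz ub] unfolding H1_def by blast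
  have H: "H2a0 a z z1 z2"
    unfolding H2a0_def H1a0_def using H1z H1z1 L2az by (simp add: z_def z1_def)
  have VS: "var_sol a \<beta> \<gamma> lam mu z z1 z2"
    unfolding var_sol_def
  proof (intro conjI allI impI)
    show "H2a0 a z z1 z2" by (rule H)
    fix \<phi> \<phi>1 \<phi>2 assume "H2a0 a \<phi> \<phi>1 \<phi>2"
    from var_sol_poly[OF e1 e2 this]
    show "(LINT x:{0<..<1}|lborel. z2 x * \<phi>2 x) + \<beta> * z 1 * \<phi> 1 + \<gamma> * z1 1 * \<phi>1 1 = lam * \<phi> 1 + mu * \<phi>1 1"
      unfolding z_def z1_def z2_def by simp
  qed
  define L where "L = \<bar>lam\<bar> + \<bar>mu\<bar>"
  have L0: "L \<ge> 0" unfolding L_def by simp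
  define N where "N = integral {0..1} (\<lambda>x. (z2 x)\<^sup>2)"
  have NL: "(LINT x:{0<..<1}|lborel. (z2 x)\<^sup>2) = N" unfolding N_def by (rule H2_facts(1)[OF H])
  have N0: "N \<ge> 0" unfolding N_def by (rule H2_facts(2)[OF H])
  have bz: "(z 1)\<^sup>2 \<le> N" unfolding N_def by (rule H2_facts(4)[OF H])
  have bz1: "(z1 1)\<^sup>2 \<le> N" unfolding N_def by (rule H2_facts(5)[OF H])
  define s where "s = N + \<beta> * (z 1)\<^sup>2 + \<gamma> * (z1 1)\<^sup>2"
  have tn: "tnorm \<beta> \<gamma> z z1 z2 = sqrt s" unfolding tnorm_def s_def NL ..
  have sN: "N \<le> s" unfolding s_def using \<beta> \<gamma> by simp
  have s0: "s \<ge> 0" using sN N0 by simp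
  have "(LINT x:{0<..<1}|lborel. z2 x * z2 x) + \<beta> * z 1 * z 1 + \<gamma> * z1 1 * z1 1 = lam * z 1 + mu * z1 1"
    using VS H unfolding var_sol_def by blast
  then have slm: "s = lam * z 1 + mu * z1 1" unfolding s_def using NL by (simp add: power2_eq_square)
  have a1: "\<bar>z 1\<bar> \<le> sqrt s"
    using real_le_rsqrt[of "\<bar>z 1\<bar>" s] bz sN by simp
  have a2: "\<bar>z1 1\<bar> \<le> sqrt s"
    using real_le_rsqrt[of "\<bar>z1 1\<bar>" s] bz1 sN by simp
  have l1: "lam * z 1 \<le> \<bar>lam\<bar> * \<bar>z 1\<bar>" using abs_ge_self[of "lam * z 1"] by (simp add: abs_mult)
  have l2: "mu * z1 1 \<le> \<bar>mu\<bar> * \<bar>z1 1\<bar>" using abs_ge_self[of "mu * z1 1"] by (simp add: abs_mult)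
  have "s \<le> \<bar>lam\<bar> * \<bar>z 1\<bar> + \<bar>mu\<bar> * \<bar>z1 1\<bar>"
    unfolding slm using l1 l2 by linarith
  also have "\<dots> \<le> \<bar>lam\<bar> * sqrt s + \<bar>mu\<bar> * sqrt s"
    using a1 a2 by (intro add_mono mult_left_mono) auto
  finally have "(sqrt s)\<^sup>2 \<le> L * sqrt s" using s0 unfolding L_def by (simp add: algebra_simps)
  then have TL: "sqrt s \<le> L"
  proof (cases "sqrt s = 0")
    case True then show ?thesis using L0 by simp
  next
    case False
    then have tp: "sqrt s > 0" using s0 by simp
    assume "(sqrt s)\<^sup>2 \<le> L * sqrt s"
    then have "sqrt s * sqrt s \<le> L * sqrt s" by (simp add: power2_eq_square)
    then show ?thesis using tp by (rule mult_right_le_imp_le)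
  qed
  then have sL: "s \<le> L\<^sup>2"
    using s0 real_sqrt_le_iff[of s "L\<^sup>2"] L0 by simp
  have T: "(tnorm \<beta> \<gamma> z z1 z2)\<^sup>2 \<le> L\<^sup>2" unfolding tn using s0 sL by simp
  have H1a0z: "H1a0 a z z1" using H unfolding H2a0_def by auto
  have Lz1: "L2 z1" using H1z1 unfolding H1_def by auto
  define J where "J = (LINT x:{0<..<1}|lborel. (z1 x)\<^sup>2)"
  define I where "I = (LINT x:{0<..<1}|lborel. (z x)\<^sup>2 / a x)"
  have JH: "J = integral {0..1} (\<lambda>x. (z1 x)\<^sup>2)" unfolding J_def by (rule L2_henstock(3)[OF Lz1])
  have J0: "J \<ge> 0" unfolding JH by (rule integral_nonneg) (intro integrable_continuous_interval continuous_intros cz1, simp)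
  have JN: "J \<le> N"
  proof -
    have "integral {0..1} (\<lambda>x. (z1 x)\<^sup>2) \<le> integral {0..1} (\<lambda>x::real. N)"
    proof (rule integral_le)
      show "(\<lambda>x. (z1 x)\<^sup>2) integrable_on {0..1}" by (intro integrable_continuous_interval continuous_intros cz1)
      show "(\<lambda>x::real. N) integrable_on {0..1}" by (rule integrable_const_ivl)
      fix x :: real assume x: "x \<in> {0..1}"
      have "(z1 x)\<^sup>2 \<le> x * N" unfolding N_def by (rule H2_facts(3)[OF H x])
      also have "\<dots> \<le> 1 * N" using x N0 by (intro mult_right_mono) auto
      finally show "(z1 x)\<^sup>2 \<le> N" by simp
    qed
    then show ?thesis unfolding JH by simp
  qed
  have IJ: "I \<le> C_HP a * J" unfolding I_def J_def by (rule C_HP_prop(1)[OF WS H1a0z])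
  have I0: "I \<ge> 0"
  proof -
    have si: "set_integrable lborel {0<..<1} (\<lambda>x. (z x)\<^sup>2 / a x)" using L2az unfolding L2a_def by auto
    have "I = integral {0<..<1} (\<lambda>x. (z x)\<^sup>2 / a x)" unfolding I_def by (rule set_borel_integral_eq_integral(2)[OF si])
    moreover have "integral {0<..<1} (\<lambda>x. (z x)\<^sup>2 / a x) \<ge> 0"
    proof (rule integral_nonneg[OF set_borel_integral_eq_integral(1)[OF si]])
      fix x :: real assume "x \<in> {0<..<1}"
      then have "x \<in> {0<..1}" by auto
      then have "a x > 0" using K(3) by blast
      then show "0 \<le> (z x)\<^sup>2 / a x" by simp
    qed
    ultimately show ?thesis by simp
  qed
  have HP: "I \<le> (4 * C_HP a + 1) * L\<^sup>2"
  proof (cases "J > 0")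
    case True
    have "I / J \<le> C_HP a" unfolding I_def J_def by (rule C_HP_prop(2)[OF WS H1a0z]) (use True J_def in simp)
    moreover have "0 \<le> I / J" using I0 True by simp
    ultimately have C0: "C_HP a \<ge> 0" by linarith
    have "J \<le> L\<^sup>2" using JN sN sL by linarith
    then have "C_HP a * J \<le> C_HP a * L\<^sup>2" using C0 by (rule mult_left_mono)
    also have "\<dots> \<le> (4 * C_HP a + 1) * L\<^sup>2" using C0 by (simp add: algebra_simps)
    finally show ?thesis using IJ by linarith
  next
    case False
    then have J00: "J = 0" using J0 by simp
    have zero: "(z1 x)\<^sup>2 = 0" if x: "x \<in> {0..1}" for x
    proof (rule has_integral_0_cbox_imp_0[of 0 1 "\<lambda>x. (z1 x)\<^sup>2"])
      show "continuous_on (cbox 0 1) (\<lambda>x. (z1 x)\<^sup>2)" by (intro continuous_intros cz1)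
      show "((\<lambda>x. (z1 x)\<^sup>2) has_integral 0) (cbox 0 1)"
        using J00 JH integrable_continuous_interval[OF continuous_on_power[OF cz1, of "{0..1}" 2]]
        by (metis box_real(2) integrable_integral)
    qed (use x in auto)
    have "z1 1 = 0" "z1 (1/2) = 0" using zero[of 1] zero[of "1/2"] by auto
    then have q1: "2 * A + 3 * B = 0" and q2: "2 * A * (1/2) + 3 * B * ((1/2) * (1/2)) = 0"
      by (simp_all add: z1_def power2_eq_square)
    then have "A = 0" "B = 0" by linarith+
    then have "lam = 0" "mu = 0" using e1 e2 by simp_all
    then have "L = 0" unfolding L_def by simp
    then show ?thesis using IJ J00 by simp
  qed
  have DA: "DA a z z1 z2 (\<lambda>x. 0)"
    unfolding DA_def
  proof (intro conjI allI impI)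
    show "H2a0 a z z1 z2" by (rule H)
    show "loc_int (\<lambda>x. 0)" unfolding loc_int_def set_integrable_def by simp
    fix \<phi> :: "real \<Rightarrow> real" assume "test_fun \<phi>"
    then show "(LINT x:{0<..<1}|lborel. z x * (deriv ^^ 4) \<phi> x) = (LINT x:{0<..<1}|lborel. 0 * \<phi> x)"
      using poly_fourth[of \<phi> A B] unfolding z_def by simp
  next
    show "L2a a (\<lambda>x. a x * 0)"
      by (simp add: L2a_def L2_def set_borel_measurable_def set_integrable_def)
  qed
  have last: "\<exists>z2' z3. (AE x in lborel. x \<in> {0<..<1} \<longrightarrow> z2' x = z2 x)
                    \<and> continuous_on {0<..1} z2' \<and> continuous_on {0<..1} z3
                    \<and> weak_deriv z2' z3
                    \<and> \<beta> * z 1 - z3 1 = lam \<and> \<gamma> * z1 1 + z2' 1 = mu"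
  proof -
    have ae: "AE x in lborel. x \<in> {0<..<1} \<longrightarrow> z2 x = z2 x" by simp
    have f1: "\<beta> * z 1 - z3 1 = lam" using e1 by (simp add: z_def z3_def)
    have f2: "\<gamma> * z1 1 + z2 1 = mu" using e2 by (simp add: z1_def z2_def algebra_simps)
    show ?thesis using ae cz2 cz3 wd2 f1 f2 by blast
  qed
  show ?thesis
  proof -
    have DAex: "\<exists>w. DA a z z1 z2 w \<and> (AE x in lborel. x \<in> {0<..<1} \<longrightarrow> a x * w x = 0)"
      using DA by (intro exI[of _ "\<lambda>x. 0"]) simp
    show ?thesis using VS HP T DAex last unfolding I_def L_def by blast
  qed
qed

theorem proposition2p2:
  fixes a :: "real \<Rightarrow> real" and \<beta> \<gamma> :: real
  assumes "WD a \<or> SD a" and "\<beta> \<ge> 0" and "\<gamma> \<ge> 0"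
  shows "(\<forall>z z1 z2. H2a0 a z z1 z2 \<longrightarrow>
            (norm2t z2 = 0 \<longrightarrow> (\<forall>x\<in>{0..1}. z x = 0)) \<and>
            (tnorm \<beta> \<gamma> z z1 z2 = 0 \<longrightarrow> (\<forall>x\<in>{0..1}. z x = 0)))
       \<and> (\<exists>c C. 0 < c \<and> 0 < C \<and> (\<forall>z z1 z2. H2a0 a z z1 z2 \<longrightarrow>
            c * norm2t z2 \<le> tnorm \<beta> \<gamma> z z1 z2 \<and> tnorm \<beta> \<gamma> z z1 z2 \<le> C * norm2t z2))
       \<and> (\<forall>lam mu :: real.
            (\<exists>z z1 z2. var_sol a \<beta> \<gamma> lam mu z z1 z2
               \<and> (LINT x:{0<..<1}|lborel. (z x)\<^sup>2 / a x) \<le> (4 * C_HP a + 1) * (\<bar>lam\<bar> + \<bar>mu\<bar>)\<^sup>2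
               \<and> (tnorm \<beta> \<gamma> z z1 z2)\<^sup>2 \<le> (\<bar>lam\<bar> + \<bar>mu\<bar>)\<^sup>2
               \<and> (\<exists>w. DA a z z1 z2 w \<and> (AE x in lborel. x \<in> {0<..<1} \<longrightarrow> a x * w x = 0))
               \<and> (\<exists>z2' z3. (AE x in lborel. x \<in> {0<..<1} \<longrightarrow> z2' x = z2 x)
                    \<and> continuous_on {0<..1} z2' \<and> continuous_on {0<..1} z3
                    \<and> weak_deriv z2' z3
                    \<and> \<beta> * z 1 - z3 1 = lam \<and> \<gamma> * z1 1 + z2' 1 = mu))
          \<and> (\<forall>z z1 z2 y y1 y2. var_sol a \<beta> \<gamma> lam mu z z1 z2 \<and> var_sol a \<beta> \<gamma> lam mu y y1 y2
               \<longrightarrow> (\<forall>x\<in>{0..1}. z x = y x)))"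
proof -
  obtain K a' where K: "0 < K" "K < 2" "\<forall>x\<in>{0<..1}. a x > 0"
    "\<forall>x\<in>{0<..1}. (a has_real_derivative a' x) (at x within {0..1})"
    "\<forall>x\<in>{0<..1}. x * \<bar>a' x\<bar> / a x \<le> K" using a_props[OF assms(1)] by blast
  have P1: "\<forall>z z1 z2. H2a0 a z z1 z2 \<longrightarrow>
            (norm2t z2 = 0 \<longrightarrow> (\<forall>x\<in>{0..1}. z x = 0)) \<and>
            (tnorm \<beta> \<gamma> z z1 z2 = 0 \<longrightarrow> (\<forall>x\<in>{0..1}. z x = 0))"
  proof (intro allI impI)
    fix z z1 z2 assume H: "H2a0 a z z1 z2"
    define N where "N = integral {0..1} (\<lambda>x. (z2 x)\<^sup>2)"
    have NL: "(LINT x:{0<..<1}|lborel. (z2 x)\<^sup>2) = N" unfolding N_def by (rule H2_facts(1)[OF H])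
    have N0: "N \<ge> 0" unfolding N_def by (rule H2_facts(2)[OF H])
    have Z: "N = 0 \<Longrightarrow> \<forall>x\<in>{0..1}. z x = 0" unfolding N_def by (rule H2_zero[OF H])
    have b1: "\<beta> * (z 1)\<^sup>2 \<ge> 0" "\<gamma> * (z1 1)\<^sup>2 \<ge> 0" using assms(2,3) by simp_all
    have A1: "norm2t z2 = 0 \<longrightarrow> (\<forall>x\<in>{0..1}. z x = 0)"
    proof
      assume "norm2t z2 = 0"
      then have "N = 0" unfolding norm2t_def NL by simp
      then show "\<forall>x\<in>{0..1}. z x = 0" by (rule Z)
    qed
    have A2: "tnorm \<beta> \<gamma> z z1 z2 = 0 \<longrightarrow> (\<forall>x\<in>{0..1}. z x = 0)"
    proof
      assume "tnorm \<beta> \<gamma> z z1 z2 = 0"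
      then have "N + \<beta> * (z 1)\<^sup>2 + \<gamma> * (z1 1)\<^sup>2 = 0" unfolding tnorm_def NL by simp
      then have "N = 0" using N0 b1 by linarith
      then show "\<forall>x\<in>{0..1}. z x = 0" by (rule Z)
    qed
    show "(norm2t z2 = 0 \<longrightarrow> (\<forall>x\<in>{0..1}. z x = 0)) \<and>
            (tnorm \<beta> \<gamma> z z1 z2 = 0 \<longrightarrow> (\<forall>x\<in>{0..1}. z x = 0))" using A1 A2 by blast
  qed
  have P2: "\<exists>c C. 0 < c \<and> 0 < C \<and> (\<forall>z z1 z2. H2a0 a z z1 z2 \<longrightarrow>
            c * norm2t z2 \<le> tnorm \<beta> \<gamma> z z1 z2 \<and> tnorm \<beta> \<gamma> z z1 z2 \<le> C * norm2t z2)"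
  proof -
    have sq: "0 < sqrt (1 + \<beta> + \<gamma>)" using assms(2,3) by simp
    have main: "1 * norm2t z2 \<le> tnorm \<beta> \<gamma> z z1 z2 \<and> tnorm \<beta> \<gamma> z z1 z2 \<le> sqrt (1 + \<beta> + \<gamma>) * norm2t z2"
      if H: "H2a0 a z z1 z2" for z z1 z2
    proof -
    define N where "N = integral {0..1} (\<lambda>x. (z2 x)\<^sup>2)"
    have NL: "(LINT x:{0<..<1}|lborel. (z2 x)\<^sup>2) = N" unfolding N_def by (rule H2_facts(1)[OF H])
    have N0: "N \<ge> 0" unfolding N_def by (rule H2_facts(2)[OF H])
    have bz: "(z 1)\<^sup>2 \<le> N" unfolding N_def by (rule H2_facts(4)[OF H])
    have bz1: "(z1 1)\<^sup>2 \<le> N" unfolding N_def by (rule H2_facts(5)[OF H])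
    have b1: "\<beta> * (z 1)\<^sup>2 \<ge> 0" "\<gamma> * (z1 1)\<^sup>2 \<ge> 0" using assms(2,3) by simp_all
    have "N \<le> N + \<beta> * (z 1)\<^sup>2 + \<gamma> * (z1 1)\<^sup>2" using b1 by linarith
    then have r1: "1 * norm2t z2 \<le> tnorm \<beta> \<gamma> z z1 z2" unfolding norm2t_def tnorm_def NL by simp
    have "\<beta> * (z 1)\<^sup>2 \<le> \<beta> * N" using bz assms(2) by (rule mult_left_mono)
    moreover have "\<gamma> * (z1 1)\<^sup>2 \<le> \<gamma> * N" using bz1 assms(3) by (rule mult_left_mono)
    ultimately have "N + \<beta> * (z 1)\<^sup>2 + \<gamma> * (z1 1)\<^sup>2 \<le> (1 + \<beta> + \<gamma>) * N" by (simp add: algebra_simps)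
    then have "sqrt (N + \<beta> * (z 1)\<^sup>2 + \<gamma> * (z1 1)\<^sup>2) \<le> sqrt (1 + \<beta> + \<gamma>) * sqrt N"
      by (simp add: real_sqrt_mult[symmetric])
    then have r2: "tnorm \<beta> \<gamma> z z1 z2 \<le> sqrt (1 + \<beta> + \<gamma>) * norm2t z2" unfolding norm2t_def tnorm_def NL .
    show "1 * norm2t z2 \<le> tnorm \<beta> \<gamma> z z1 z2 \<and> tnorm \<beta> \<gamma> z z1 z2 \<le> sqrt (1 + \<beta> + \<gamma>) * norm2t z2" using r1 r2 by blast
  qed
    show ?thesis
      by (rule exI[of _ 1], rule exI[of _ "sqrt (1 + \<beta> + \<gamma>)"]) (use main sq in auto)
  qed
  have P3: "\<forall>lam mu :: real.
            (\<exists>z z1 z2. var_sol a \<beta> \<gamma> lam mu z z1 z2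
               \<and> (LINT x:{0<..<1}|lborel. (z x)\<^sup>2 / a x) \<le> (4 * C_HP a + 1) * (\<bar>lam\<bar> + \<bar>mu\<bar>)\<^sup>2
               \<and> (tnorm \<beta> \<gamma> z z1 z2)\<^sup>2 \<le> (\<bar>lam\<bar> + \<bar>mu\<bar>)\<^sup>2
               \<and> (\<exists>w. DA a z z1 z2 w \<and> (AE x in lborel. x \<in> {0<..<1} \<longrightarrow> a x * w x = 0))
               \<and> (\<exists>z2' z3. (AE x in lborel. x \<in> {0<..<1} \<longrightarrow> z2' x = z2 x)
                    \<and> continuous_on {0<..1} z2' \<and> continuous_on {0<..1} z3
                    \<and> weak_deriv z2' z3
                    \<and> \<beta> * z 1 - z3 1 = lam \<and> \<gamma> * z1 1 + z2' 1 = mu))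
          \<and> (\<forall>z z1 z2 y y1 y2. var_sol a \<beta> \<gamma> lam mu z z1 z2 \<and> var_sol a \<beta> \<gamma> lam mu y y1 y2
               \<longrightarrow> (\<forall>x\<in>{0..1}. z x = y x))"
  proof (intro allI conjI impI)
    fix lam mu :: real
    show "\<exists>z z1 z2. var_sol a \<beta> \<gamma> lam mu z z1 z2
               \<and> (LINT x:{0<..<1}|lborel. (z x)\<^sup>2 / a x) \<le> (4 * C_HP a + 1) * (\<bar>lam\<bar> + \<bar>mu\<bar>)\<^sup>2
               \<and> (tnorm \<beta> \<gamma> z z1 z2)\<^sup>2 \<le> (\<bar>lam\<bar> + \<bar>mu\<bar>)\<^sup>2
               \<and> (\<exists>w. DA a z z1 z2 w \<and> (AE x in lborel. x \<in> {0<..<1} \<longrightarrow> a x * w x = 0))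
               \<and> (\<exists>z2' z3. (AE x in lborel. x \<in> {0<..<1} \<longrightarrow> z2' x = z2 x)
                    \<and> continuous_on {0<..1} z2' \<and> continuous_on {0<..1} z3
                    \<and> weak_deriv z2' z3
                    \<and> \<beta> * z 1 - z3 1 = lam \<and> \<gamma> * z1 1 + z2' 1 = mu)"
      by (rule existence[OF assms])
    fix z z1 z2 y y1 y2 :: "real \<Rightarrow> real"
    assume "var_sol a \<beta> \<gamma> lam mu z z1 z2 \<and> var_sol a \<beta> \<gamma> lam mu y y1 y2"
    then show "\<forall>x\<in>{0..1}. z x = y x" using uniqueness[OF assms] by blast
  qed
  show ?thesis using P1 P2 P3 by blast
qed


end
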